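(* Let $\mathcal P$ be a polycyclic presentation on $g_1,\ldots,g_n$ and assume that the subpresentation $\mathcal P^{[2]}$ is consistent. Let $\tau\colon F_2\to F_2$ be the monoid homomorphism with $\tau(g_j)=g^{a_{1,j}}$ and $\tau(g_j^{-1})=g^{c_{1,j}}$ for $2\le j\le n$. Then $\tau$ induces an endomorphism of $H^{[2]}$ (i.e. there is an endomorphism $\sigma$ of $H^{[2]}$ with $\sigma\circ\theta_2=\theta_2\circ\tau$) if and only if the equations $c(g_j\,g^{a_{j,k}}\,g_1)=c(g_kg_jg_1)$ for all $n\ge k>j>1$ and $c(g_j^{r_j}g_1)=c(g^{e_j}g_1)$ for all $j>1$ with $r_j<\infty$ hold.
   Context: A polycyclic presentation $\mathcal P$ on generators $g_1,\ldots,g_n$ consists of $r_1,\ldots,r_n\in\mathbb N\cup\{\infty\}$ and integers $e_{i,k},a_{i,j,k},b_{i,j,k}$ ($1\le i<j\le n$, $1\le k\le n$) with $0\le e_{i,k},a_{i,j,k},b_{i,j,k}<r_k$ whenever $r_k<\infty$, and has defining relations $g_i^{r_i}=g^{e_i}$ (for $r_i<\infty$), $g_jg_i=g_ig^{a_{i,j}}$ (for $i<j$), $g_jg_i^{-1}=g_i^{-1}g^{b_{i,j}}$ (for $i<j$, $r_i=\infty$), where $g^{e_i}=g_{i+1}^{e_{i,i+1}}\cdots g_n^{e_{i,n}}$, $g^{a_{i,j}}=g_{i+1}^{a_{i,j,i+1}}\cdots g_n^{a_{i,j,n}}$, $g^{b_{i,j}}=g_{i+1}^{b_{i,j,i+1}}\cdots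 g_n^{b_{i,j,n}}$ (with $g_k^x$ for $x<0$ meaning $(g_k^{-1})^{|x|}$). From the presentation one computes integers $c_{i,j,k},d_{i,j,k},f_{i,k}$ (in $[0,r_k)$ when $r_k<\infty$) such that in the presented group $g_j^{-1}g_i=g_ig^{c_{i,j}}$ ($i<j$, $r_j=\infty$), $g_j^{-1}g_i^{-1}=g_i^{-1}g^{d_{i,j}}$ ($i<j$, $r_i=r_j=\infty$), $g_i^{-1}=g_i^{r_i-1}g^{f_i}$ ($r_i<\infty$); in particular $g^{c_{1,j}}=g_2^{c_{1,j,2}}\cdots g_n^{c_{1,j,n}}$ is the reduced word representing the inverse of $g^{a_{1,j}}$. Let $M$ be the free monoid on $\{g_1^{\pm1},\ldots,g_n^{\pm1}\}$. A collection step replaces a subword equal to the left-hand side of one of these six kinds of relations by its right-hand side, or deletes $g_ig_i^{-1}$ or $g_i^{-1}g_i$; a word admitting no step is reduced (of the form $g_1^{x_1}\cdots g_n^{x_n}$ with $0\le x_i<r_i$ if $r_i<\infty$). The collection-to-the-left algorithm applies steps, always choosing the leftmost occurrence of a non-reduced subword involving a generator of smallest index (lower index has priority), until the word is reduced; $c\colon M\to M$ maps a word to the result. $\mathcal P^{[2]}$ is the presentation on $g_2,\ldots,g_n$ consisting of those relations above with $i\ge2$; $H^{[2]}$ is the group it defines; $F_2$ is the free monoid on $\{g_2^{\pm1},\ldots,g_n^{\pm1}\}$ and $\theta_2\colon F_2\to H^{[2]}$ the natural epimorphism. $\mathcal P^{[2]}$ is consistent if every element of $H^{[2]}$ is represented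 by exactly one reduced word in $g_2,\ldots,g_n$. *)

theory Defs
  imports "HOL-Algebra.Group" "HOL-Library.Extended_Nat" "HOL-Library.Product_Lexorder"
begin

text \<open>A letter (i, True) stands for g_i, (i, False) for g_i^{-1}.
  Words are lists of letters (elements of the free monoid M).\<close>

type_synonym letter = "nat \<times> bool"
type_synonym word = "letter list"

definition gpow :: "nat \<Rightarrow> int \<Rightarrow> word" where
  "gpow k x = (if 0 \<le> x then replicate (nat x) (k, True) else replicate (nat (- x)) (k, False))"

text \<open>Data of a polycyclic presentation on g_1..g_n, together with the derived
  exponents c, d, f. Infinite relative orders are represented by \<infinity> :: enat.\<close>

record pcp =
  pc_n :: nat
  pc_r :: "nat \<Rightarrow> enat"
  pc_e :: "nat \<Rightarrow> nat \<Rightarrow> int"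
  pc_a :: "nat \<Rightarrow> nat \<Rightarrow> nat \<Rightarrow> int"
  pc_b :: "nat \<Rightarrow> nat \<Rightarrow> nat \<Rightarrow> int"
  pc_c :: "nat \<Rightarrow> nat \<Rightarrow> nat \<Rightarrow> int"
  pc_d :: "nat \<Rightarrow> nat \<Rightarrow> nat \<Rightarrow> int"
  pc_f :: "nat \<Rightarrow> nat \<Rightarrow> int"

definition gvec :: "pcp \<Rightarrow> nat \<Rightarrow> (nat \<Rightarrow> int) \<Rightarrow> word" where
  "gvec P i v = concat (map (\<lambda>k. gpow k (v k)) [Suc i..<Suc (pc_n P)])"

definition in_range :: "pcp \<Rightarrow> nat \<Rightarrow> int \<Rightarrow> bool" where
  "in_range P k x = (\<forall>t. pc_r P k = enat t \<longrightarrow> 0 \<le> x \<and> x < int t)"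

definition pcp_valid :: "pcp \<Rightarrow> bool" where
  "pcp_valid P = (
     (\<forall>i\<in>{1..pc_n P}. pc_r P i \<noteq> 0) \<and>
     (\<forall>i\<in>{1..pc_n P}. \<forall>k\<in>{1..pc_n P}. pc_r P i \<noteq> \<infinity> \<longrightarrow> in_range P k (pc_e P i k)) \<and>
     (\<forall>i j k. 1 \<le> i \<and> i < j \<and> j \<le> pc_n P \<and> 1 \<le> k \<and> k \<le> pc_n P \<longrightarrow>
         in_range P k (pc_a P i j k) \<and>
         (pc_r P i = \<infinity> \<longrightarrow> in_range P k (pc_b P i j k))))"

definition alph :: "pcp \<Rightarrow> nat \<Rightarrow> letter set" where
  "alph P k = {(i, s). k \<le> i \<and> i \<le> pc_n P}"

text \<open>Defining relations of the subpresentation P^[k] (those with i \<ge> k);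
  P^[1] is P itself.\<close>
definition rels :: "pcp \<Rightarrow> nat \<Rightarrow> (word \<times> word) set" where
  "rels P k =
     {(replicate t (i, True), gvec P i (pc_e P i)) | i t. k \<le> i \<and> i \<le> pc_n P \<and> pc_r P i = enat t} \<union>
     {([(j, True), (i, True)], (i, True) # gvec P i (pc_a P i j)) | i j. k \<le> i \<and> i < j \<and> j \<le> pc_n P} \<union>
     {([(j, True), (i, False)], (i, False) # gvec P i (pc_b P i j)) | i j.
          k \<le> i \<and> i < j \<and> j \<le> pc_n P \<and> pc_r P i = \<infinity>}"

text \<open>The congruence on words over g_k..g_n generated by the relations of P^[k]
  and free cancellation; its classes are the elements of the presented group.\<close>
inductive pc_eq :: "pcp \<Rightarrow> nat \<Rightarrow> word \<Rightarrow> word \<Rightarrow> bool" for P k where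
  refl: "w \<in> lists (alph P k) \<Longrightarrow> pc_eq P k w w"
| sym: "pc_eq P k u v \<Longrightarrow> pc_eq P k v u"
| trans: "pc_eq P k u v \<Longrightarrow> pc_eq P k v w \<Longrightarrow> pc_eq P k u w"
| rel: "(u, v) \<in> rels P k \<Longrightarrow> x \<in> lists (alph P k) \<Longrightarrow> y \<in> lists (alph P k) \<Longrightarrow>
         pc_eq P k (x @ u @ y) (x @ v @ y)"
| cancel: "(i, s) \<in> alph P k \<Longrightarrow> x \<in> lists (alph P k) \<Longrightarrow> y \<in> lists (alph P k) \<Longrightarrow>
         pc_eq P k (x @ [(i, s), (i, \<not> s)] @ y) (x @ y)"

definition theta :: "pcp \<Rightarrow> nat \<Rightarrow> word \<Rightarrow> word set" where
  "theta P k w = {v \<in> lists (alph P k). pc_eq P k w v}"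

text \<open>The group H^[k] defined by P^[k] (H^[1] is the group defined by P).\<close>
definition pc_group :: "pcp \<Rightarrow> nat \<Rightarrow> word set monoid" where
  "pc_group P k =
     \<lparr> carrier = theta P k ` lists (alph P k),
       mult = (\<lambda>X Y. theta P k ((SOME u. u \<in> X) @ (SOME v. v \<in> Y))),
       one = theta P k [] \<rparr>"

definition reduced_from :: "pcp \<Rightarrow> nat \<Rightarrow> word \<Rightarrow> bool" where
  "reduced_from P k w = (\<exists>x. w = concat (map (\<lambda>i. gpow i (x i)) [k..<Suc (pc_n P)]) \<and>
                               (\<forall>i\<in>{k..pc_n P}. in_range P i (x i)))"

definition consistent_from :: "pcp \<Rightarrow> nat \<Rightarrow> bool" where
  "consistent_from P k = (\<forall>X\<in>carrier (pc_group P k).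
      \<exists>!w. w \<in> lists (alph P k) \<and> reduced_from P k w \<and> theta P k w = X)"

text \<open>Properties of the derived exponents c, d, f: for i \<ge> 2 the relations hold in
  H^[2]; g^{c_{1,j}} is the reduced word representing the inverse of g^{a_{1,j}} in H^[2];
  the remaining relations for i = 1 hold in the group defined by P.\<close>
definition pcp_derived :: "pcp \<Rightarrow> bool" where
  "pcp_derived P = (
     (\<forall>i j k. 1 \<le> i \<and> i < j \<and> j \<le> pc_n P \<and> 1 \<le> k \<and> k \<le> pc_n P \<longrightarrow>
         (pc_r P j = \<infinity> \<longrightarrow> in_range P k (pc_c P i j k)) \<and>
         (pc_r P i = \<infinity> \<and> pc_r P j = \<infinity> \<longrightarrow> in_range P k (pc_d P i j k))) \<and>
     (\<forall>i\<in>{1..pc_n P}. \<forall>k\<in>{1..pc_n P}. pc_r P i \<noteq> \<infinity> \<longrightarrow> in_range P k (pc_f P i k)) \<and>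
     (\<forall>i j. 2 \<le> i \<and> i < j \<and> j \<le> pc_n P \<and> pc_r P j = \<infinity> \<longrightarrow>
         pc_eq P 2 [(j, False), (i, True)] ((i, True) # gvec P i (pc_c P i j))) \<and>
     (\<forall>i j. 2 \<le> i \<and> i < j \<and> j \<le> pc_n P \<and> pc_r P i = \<infinity> \<and> pc_r P j = \<infinity> \<longrightarrow>
         pc_eq P 2 [(j, False), (i, False)] ((i, False) # gvec P i (pc_d P i j))) \<and>
     (\<forall>i t. 2 \<le> i \<and> i \<le> pc_n P \<and> pc_r P i = enat t \<longrightarrow>
         pc_eq P 2 [(i, False)] (replicate (t - 1) (i, True) @ gvec P i (pc_f P i))) \<and>
     (\<forall>j. 2 \<le> j \<and> j \<le> pc_n P \<longrightarrow>
         (\<forall>k\<in>{2..pc_n P}. in_range P k (pc_c P 1 j k)) \<and>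
         pc_eq P 2 (gvec P 1 (pc_a P 1 j) @ gvec P 1 (pc_c P 1 j)) []) \<and>
     (\<forall>j. 1 < j \<and> j \<le> pc_n P \<and> pc_r P 1 = \<infinity> \<and> pc_r P j = \<infinity> \<longrightarrow>
         pc_eq P 1 [(j, False), (1, False)] ((1, False) # gvec P 1 (pc_d P 1 j))) \<and>
     (\<forall>t. 1 \<le> pc_n P \<and> pc_r P 1 = enat t \<longrightarrow>
         pc_eq P 1 [(1, False)] (replicate (t - 1) (1, True) @ gvec P 1 (pc_f P 1))))"

text \<open>Candidate collection steps in w: (m, p, q, l, rhs) means that the subword of
  length l starting at position p is the left-hand side of a relation of kind q
  (1: power, 2: conjugate g_j g_i, 3: g_j g_i^{-1}, 4: g_j^{-1} g_i, 5: g_j^{-1} g_i^{-1},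
  6: g_i^{-1}, 7: free cancellation), m is the smallest generator index involved,
  and rhs is the replacement.\<close>
definition cands :: "pcp \<Rightarrow> word \<Rightarrow> (nat \<times> nat \<times> nat \<times> nat \<times> word) set" where
  "cands P w =
     {(i, p, 1, t, gvec P i (pc_e P i)) | i p t. 1 \<le> i \<and> i \<le> pc_n P \<and> pc_r P i = enat t \<and>
          take t (drop p w) = replicate t (i, True) \<and> p + t \<le> length w} \<union>
     {(i, p, 2, 2, (i, True) # gvec P i (pc_a P i j)) | i j p. 1 \<le> i \<and> i < j \<and> j \<le> pc_n P \<and>
          take 2 (drop p w) = [(j, True), (i, True)]} \<union>
     {(i, p, 3, 2, (i, False) # gvec P i (pc_b P i j)) | i j p. 1 \<le> i \<and> i < j \<and> j \<le> pc_n P \<and>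
          pc_r P i = \<infinity> \<and> take 2 (drop p w) = [(j, True), (i, False)]} \<union>
     {(i, p, 4, 2, (i, True) # gvec P i (pc_c P i j)) | i j p. 1 \<le> i \<and> i < j \<and> j \<le> pc_n P \<and>
          pc_r P j = \<infinity> \<and> take 2 (drop p w) = [(j, False), (i, True)]} \<union>
     {(i, p, 5, 2, (i, False) # gvec P i (pc_d P i j)) | i j p. 1 \<le> i \<and> i < j \<and> j \<le> pc_n P \<and>
          pc_r P i = \<infinity> \<and> pc_r P j = \<infinity> \<and> take 2 (drop p w) = [(j, False), (i, False)]} \<union>
     {(i, p, 6, 1, replicate (t - 1) (i, True) @ gvec P i (pc_f P i)) | i p t. 1 \<le> i \<and> i \<le> pc_n P \<and>
          pc_r P i = enat t \<and> take 1 (drop p w) = [(i, False)]} \<union>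
     {(i, p, 7, 2, []) | i s p. 1 \<le> i \<and> i \<le> pc_n P \<and> take 2 (drop p w) = [(i, s), (i, \<not> s)]}"

text \<open>One step of collection to the left: among all possible steps choose the one
  involving the smallest generator index, then the leftmost one (ties between
  kinds of relation at the same position broken by the kind number).\<close>
definition collect_step :: "pcp \<Rightarrow> word \<Rightarrow> word option" where
  "collect_step P w =
     (if cands P w = {} then None
      else (let (m, p, q) = Min ((\<lambda>(m, p, q, l, rhs). (m, p, q)) ` cands P w);
                (l, rhs) = (THE lr. (m, p, q, fst lr, snd lr) \<in> cands P w)
            in Some (take p w @ rhs @ drop (p + l) w)))"

definition collect :: "pcp \<Rightarrow> word \<Rightarrow> word" where
  "collect P w = (THE v. (\<lambda>x y. collect_step P x = Some y)\<^sup>*\<^sup>* w v \<and> collect_step P v = None)"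

definition tau :: "pcp \<Rightarrow> word \<Rightarrow> word" where
  "tau P w = concat (map (\<lambda>(j, s). if s then gvec P 1 (pc_a P 1 j) else gvec P 1 (pc_c P 1 j)) w)"

end

theory Submission
  imports Defs
begin
lemma set_gpow: "a \<in> set (gpow k x) \<Longrightarrow> fst a = k"
  by (auto simp: gpow_def split: if_splits)

lemma set_gpow_sign: "a \<in> set (gpow k x) \<Longrightarrow> snd a = (0 \<le> x)"
  by (auto simp: gpow_def split: if_splits)

lemma set_gvec: "a \<in> set (gvec P i v) \<Longrightarrow> i < fst a \<and> fst a \<le> pc_n P"
  by (auto simp: gvec_def dest!: set_gpow)

lemma set_gvec': "(a, b) \<in> set (gvec P i v) \<Longrightarrow> i < a \<and> a \<le> pc_n P"
  using set_gvec by fastforce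

lemma gvec_lists: "k \<le> Suc i \<Longrightarrow> gvec P i v \<in> lists (alph P k)"
  by (auto simp: alph_def dest!: set_gvec)

lemma pc_eq_lists: "pc_eq P k u v \<Longrightarrow> u \<in> lists (alph P k) \<and> v \<in> lists (alph P k)"
proof (induction rule: pc_eq.induct)
  case (rel u v x y)
  then have "u \<in> lists (alph P k) \<and> v \<in> lists (alph P k)"
    unfolding rels_def by (fastforce simp: alph_def dest: set_gvec')
  then show ?case using rel by auto
next
  case (cancel i s x y)
  then show ?case by (auto simp: alph_def)
qed auto

lemma pc_eq_cong: "pc_eq P k u v \<Longrightarrow> x \<in> lists (alph P k) \<Longrightarrow> y \<in> lists (alph P k) \<Longrightarrow>
   pc_eq P k (x @ u @ y) (x @ v @ y)"
proof (induction arbitrary: x y rule: pc_eq.induct)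
  case (refl w)
  then show ?case by (intro pc_eq.refl) auto
next
  case (sym u v)
  then show ?case by (blast intro: pc_eq.sym)
next
  case (trans u v w)
  then show ?case by (blast intro: pc_eq.trans)
next
  case (rel u v x' y')
  then show ?case using pc_eq.rel[of u v P k "x @ x'" "y' @ y"] by auto
next
  case (cancel i s x' y')
  then show ?case using pc_eq.cancel[of i s P k "x @ x'" "y' @ y"] by auto
qed

lemma pc_eq_congL: "pc_eq P k u v \<Longrightarrow> x \<in> lists (alph P k) \<Longrightarrow> pc_eq P k (x @ u) (x @ v)"
  using pc_eq_cong[of P k u v x "[]"] by auto
lemma pc_eq_congR: "pc_eq P k u v \<Longrightarrow> y \<in> lists (alph P k) \<Longrightarrow> pc_eq P k (u @ y) (v @ y)"
  using pc_eq_cong[of P k u v "[]" y] by auto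

lemma pc_eq_app: "pc_eq P k u v \<Longrightarrow> pc_eq P k u' v' \<Longrightarrow> pc_eq P k (u @ u') (v @ v')"
  by (meson pc_eq.trans pc_eq_congL pc_eq_congR pc_eq_lists)

lemma pc_eq_mono: "pc_eq P k' u v \<Longrightarrow> k \<le> k' \<Longrightarrow> pc_eq P k u v"
proof (induction rule: pc_eq.induct)
  case (refl w)
  then show ?case by (intro pc_eq.refl) (auto simp: alph_def)
next
  case (sym u v)
  then show ?case by (blast intro: pc_eq.sym)
next
  case (trans u v w)
  then show ?case by (blast intro: pc_eq.trans)
next
  case (rel u v x y)
  have "rels P k' \<subseteq> rels P k" unfolding rels_def
    using rel.prems by (intro Un_mono) (blast intro: order_trans)+
  then have "(u, v) \<in> rels P k" using rel by blast
  moreover have "lists (alph P k') \<subseteq> lists (alph P k)" using rel by (auto simp: alph_def)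
  ultimately show ?case using rel by (blast intro: pc_eq.rel)
next
  case (cancel i s x y)
  moreover have "lists (alph P k') \<subseteq> lists (alph P k)" using cancel by (auto simp: alph_def)
  moreover have "(i,s) \<in> alph P k" using cancel by (auto simp: alph_def)
  ultimately show ?case by (blast intro: pc_eq.cancel)
qed

definition winv :: "word \<Rightarrow> word" where
  "winv w = rev (map (\<lambda>(i, s). (i, \<not> s)) w)"

lemma winv_simps[simp]: "winv [] = []" "winv (a # w) = winv w @ [(fst a, \<not> snd a)]"
  "winv (u @ v) = winv v @ winv u"
  by (auto simp: winv_def split: prod.splits)

lemma winv_lists[simp]: "(winv w \<in> lists A') = (w \<in> lists (alph P k))" if "A' = alph P k"
  using that by (induction w) (auto simp: alph_def)

lemma winv_l: "w \<in> lists (alph P k) \<Longrightarrow> pc_eq P k (winv w @ w) []"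
proof (induction w)
  case Nil
  then show ?case by (auto intro: pc_eq.refl)
next
  case (Cons a w)
  obtain i s where a: "a = (i, s)" by (cases a)
  have c: "pc_eq P k (winv w @ [(i, \<not> s), (i, \<not>\<not> s)] @ w) (winv w @ w)"
    using Cons by (intro pc_eq.cancel) (auto simp: a alph_def)
  show ?case using pc_eq.trans[OF c Cons.IH] Cons by (auto simp: a)
qed

lemma winv_winv[simp]: "winv (winv w) = w"
  by (induction w) auto

lemma winv_r: "w \<in> lists (alph P k) \<Longrightarrow> pc_eq P k (w @ winv w) []"
  using winv_l[of "winv w" P k] by simp

lemma theta_mem: "u \<in> lists (alph P k) \<Longrightarrow> u \<in> theta P k u"
  by (auto simp: theta_def intro: pc_eq.refl)

lemma theta_eq_iff: "u \<in> lists (alph P k) \<Longrightarrow> v \<in> lists (alph P k) \<Longrightarrow>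
   theta P k u = theta P k v \<longleftrightarrow> pc_eq P k u v"
proof
  assume "theta P k u = theta P k v" "u \<in> lists (alph P k)"
  then have "u \<in> theta P k v" using theta_mem by metis
  then show "pc_eq P k u v" by (auto simp: theta_def intro: pc_eq.sym)
next
  assume "pc_eq P k u v"
  then show "theta P k u = theta P k v"
    by (auto simp: theta_def intro: pc_eq.sym pc_eq.trans)
qed

lemma theta_mult: "u \<in> lists (alph P k) \<Longrightarrow> v \<in> lists (alph P k) \<Longrightarrow>
  theta P k u \<otimes>\<^bsub>pc_group P k\<^esub> theta P k v = theta P k (u @ v)"
proof -
  assume u: "u \<in> lists (alph P k)" and v: "v \<in> lists (alph P k)"
  define a where "a = (SOME a. a \<in> theta P k u)"
  define b where "b = (SOME b. b \<in> theta P k v)"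
  have "a \<in> theta P k u" unfolding a_def by (rule someI, rule theta_mem[OF u])
  then have a: "pc_eq P k u a" by (auto simp: theta_def)
  have "b \<in> theta P k v" unfolding b_def by (rule someI, rule theta_mem[OF v])
  then have b: "pc_eq P k v b" by (auto simp: theta_def)
  have "pc_eq P k (u @ v) (a @ b)" by (rule pc_eq_app[OF a b])
  then have "theta P k (a @ b) = theta P k (u @ v)"
    using pc_eq_lists by (metis theta_eq_iff pc_eq.sym)
  then show ?thesis by (simp add: pc_group_def a_def b_def)
qed

lemma carrier_pc_group: "carrier (pc_group P k) = theta P k ` lists (alph P k)"
  by (simp add: pc_group_def)

lemma one_pc_group: "\<one>\<^bsub>pc_group P k\<^esub> = theta P k []"
  by (simp add: pc_group_def)

lemma group_pc: "group (pc_group P k)"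
proof (rule groupI)
  fix x y assume "x \<in> carrier (pc_group P k)" "y \<in> carrier (pc_group P k)"
  then obtain u v where "u \<in> lists (alph P k)" "v \<in> lists (alph P k)" "x = theta P k u" "y = theta P k v"
    by (auto simp: carrier_pc_group)
  then show "x \<otimes>\<^bsub>pc_group P k\<^esub> y \<in> carrier (pc_group P k)"
    by (simp add: carrier_pc_group theta_mult)
next
  show "\<one>\<^bsub>pc_group P k\<^esub> \<in> carrier (pc_group P k)" by (auto simp: carrier_pc_group one_pc_group)
next
  fix x y z assume "x \<in> carrier (pc_group P k)" "y \<in> carrier (pc_group P k)" "z \<in> carrier (pc_group P k)"
  then obtain u v w where "u \<in> lists (alph P k)" "v \<in> lists (alph P k)" "w \<in> lists (alph P k)"
     "x = theta P k u" "y = theta P k v" "z = theta P k w"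
    by (auto simp: carrier_pc_group)
  then show "x \<otimes>\<^bsub>pc_group P k\<^esub> y \<otimes>\<^bsub>pc_group P k\<^esub> z = x \<otimes>\<^bsub>pc_group P k\<^esub> (y \<otimes>\<^bsub>pc_group P k\<^esub> z)"
    by (simp add: theta_mult del: in_lists_conv_set)
next
  fix x assume "x \<in> carrier (pc_group P k)"
  then obtain u where "u \<in> lists (alph P k)" "x = theta P k u"
    by (auto simp: carrier_pc_group)
  then show "\<one>\<^bsub>pc_group P k\<^esub> \<otimes>\<^bsub>pc_group P k\<^esub> x = x"
    by (simp add: theta_mult one_pc_group del: in_lists_conv_set)
next
  fix x assume "x \<in> carrier (pc_group P k)"
  then obtain u where u: "u \<in> lists (alph P k)" "x = theta P k u" by (auto simp: carrier_pc_group)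
  have "theta P k (winv u) \<otimes>\<^bsub>pc_group P k\<^esub> x = theta P k []"
    using u winv_l[OF u(1)] by (simp add: theta_mult theta_eq_iff)
  moreover have "theta P k (winv u) \<in> carrier (pc_group P k)" using u by (auto simp: carrier_pc_group)
  ultimately show "\<exists>y\<in>carrier (pc_group P k). y \<otimes>\<^bsub>pc_group P k\<^esub> x = \<one>\<^bsub>pc_group P k\<^esub>"
    by (auto simp: one_pc_group)
qed

lemma theta_carrier: "u \<in> lists (alph P k) \<Longrightarrow> theta P k u \<in> carrier (pc_group P k)"
  by (simp add: carrier_pc_group)

lemma theta_winv: "u \<in> lists (alph P k) \<Longrightarrow> theta P k (winv u) = inv\<^bsub>pc_group P k\<^esub> theta P k u"
proof -
  assume u: "u \<in> lists (alph P k)"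
  interpret group "pc_group P k" by (rule group_pc)
  show ?thesis
    using u winv_l[OF u] by (intro inv_equality[symmetric]) (auto simp: theta_mult theta_eq_iff theta_carrier one_pc_group)
qed

lemma pc_cancel_left: "x \<in> lists (alph P k) \<Longrightarrow> u \<in> lists (alph P k) \<Longrightarrow> v \<in> lists (alph P k) \<Longrightarrow>
  pc_eq P k (x @ u) (x @ v) \<Longrightarrow> pc_eq P k u v"
proof -
  assume x: "x \<in> lists (alph P k)" and u: "u \<in> lists (alph P k)" and v: "v \<in> lists (alph P k)"
    and e: "pc_eq P k (x @ u) (x @ v)"
  interpret group "pc_group P k" by (rule group_pc)
  have "theta P k x \<otimes>\<^bsub>pc_group P k\<^esub> theta P k u = theta P k x \<otimes>\<^bsub>pc_group P k\<^esub> theta P k v"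
    using e x u v by (simp add: theta_mult theta_eq_iff)
  then have "theta P k u = theta P k v" using x u v by (simp add: theta_carrier)
  then show ?thesis using u v theta_eq_iff by blast
qed

lemma take2_drop: "take 2 (drop p w) = [a, b] \<longleftrightarrow> Suc p < length w \<and> w ! p = a \<and> w ! Suc p = b"
proof (cases "Suc p < length w")
  case True
  then have "drop p w = w ! p # w ! Suc p # drop (Suc (Suc p)) w"
    by (metis Cons_nth_drop_Suc Suc_lessD)
  then show ?thesis using True by simp
next
  case False
  then have "length (take 2 (drop p w)) < 2" by simp
  then show ?thesis using False by (metis One_nat_def length_Cons list.size(3) numeral_2_eq_2 order_less_irrefl)
qed

lemma take1_drop: "take 1 (drop p w) = [a] \<longleftrightarrow> p < length w \<and> w ! p = a"
proof (cases "p < length w")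
  case True
  then have "drop p w = w ! p # drop (Suc p) w"
    by (metis Cons_nth_drop_Suc)
  then show ?thesis using True by simp
next
  case False
  then show ?thesis by simp
qed

lemma take1_drop': "take (Suc 0) (drop p w) = [a] \<longleftrightarrow> p < length w \<and> w ! p = a"
  using take1_drop by simp

lemma taket_drop: "p + t \<le> length w \<Longrightarrow> take t (drop p w) = replicate t c \<longleftrightarrow> (\<forall>k<t. w ! (p + k) = c)"
  by (auto simp: list_eq_iff_nth_eq)

lemma cands_nth: "(m, p, q, l, rhs) \<in> cands P w \<longleftrightarrow>
 (q = 1 \<and> 1 \<le> m \<and> m \<le> pc_n P \<and> pc_r P m = enat l \<and> p + l \<le> length w \<and> (\<forall>k<l. w ! (p + k) = (m, True))
    \<and> rhs = gvec P m (pc_e P m))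
 \<or> (q = 2 \<and> l = 2 \<and> 1 \<le> m \<and> Suc p < length w \<and> w ! Suc p = (m, True) \<and> snd (w ! p) \<and> m < fst (w ! p)
    \<and> fst (w ! p) \<le> pc_n P \<and> rhs = (m, True) # gvec P m (pc_a P m (fst (w ! p))))
 \<or> (q = 3 \<and> l = 2 \<and> 1 \<le> m \<and> Suc p < length w \<and> w ! Suc p = (m, False) \<and> snd (w ! p) \<and> m < fst (w ! p)
    \<and> fst (w ! p) \<le> pc_n P \<and> pc_r P m = \<infinity> \<and> rhs = (m, False) # gvec P m (pc_b P m (fst (w ! p))))
 \<or> (q = 4 \<and> l = 2 \<and> 1 \<le> m \<and> Suc p < length w \<and> w ! Suc p = (m, True) \<and> \<not> snd (w ! p) \<and> m < fst (w ! p)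
    \<and> fst (w ! p) \<le> pc_n P \<and> pc_r P (fst (w ! p)) = \<infinity> \<and> rhs = (m, True) # gvec P m (pc_c P m (fst (w ! p))))
 \<or> (q = 5 \<and> l = 2 \<and> 1 \<le> m \<and> Suc p < length w \<and> w ! Suc p = (m, False) \<and> \<not> snd (w ! p) \<and> m < fst (w ! p)
    \<and> fst (w ! p) \<le> pc_n P \<and> pc_r P m = \<infinity> \<and> pc_r P (fst (w ! p)) = \<infinity>
    \<and> rhs = (m, False) # gvec P m (pc_d P m (fst (w ! p))))
 \<or> (q = 6 \<and> l = 1 \<and> 1 \<le> m \<and> m \<le> pc_n P \<and> p < length w \<and> w ! p = (m, False)
    \<and> (\<exists>t. pc_r P m = enat t \<and> rhs = replicate (t - 1) (m, True) @ gvec P m (pc_f P m)))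
 \<or> (q = 7 \<and> l = 2 \<and> 1 \<le> m \<and> m \<le> pc_n P \<and> Suc p < length w \<and> fst (w ! p) = m
    \<and> w ! Suc p = (m, \<not> snd (w ! p)) \<and> rhs = [])"
  (is "?L \<longleftrightarrow> ?R")
proof
  assume ?L
  then show ?R unfolding cands_def
    by (elim UnE CollectE exE conjE) (simp_all add: take2_drop take1_drop take1_drop' taket_drop)
next
  assume R: ?R
  show ?L
  proof (cases q)
    case 0 then show ?thesis using R by simp
  next
    case (Suc q1)
    show ?thesis
    proof (cases "q = 1")
      case True then show ?thesis using R unfolding cands_def by (simp add: taket_drop)
    next
      case q1: False
      show ?thesis
      proof (cases "q = 2")
        case True
        then show ?thesis using R unfolding cands_def
          by (intro UnI1 UnI2) (auto simp: take2_drop intro!: exI[of _ "fst (w ! p)"] prod_eqI)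
      next
        case q2: False
        show ?thesis
        proof (cases "q = 3")
          case True
          then show ?thesis using R unfolding cands_def
            by (intro UnI1 UnI2) (auto simp: take2_drop intro!: exI[of _ "fst (w ! p)"] prod_eqI)
        next
          case q3: False
          show ?thesis
          proof (cases "q = 4")
            case True
            then show ?thesis using R unfolding cands_def
              by (intro UnI1 UnI2) (auto simp: take2_drop intro!: exI[of _ "fst (w ! p)"] prod_eqI)
          next
            case q4: False
            show ?thesis
            proof (cases "q = 5")
              case True
              then show ?thesis using R unfolding cands_def
                by (intro UnI1 UnI2) (auto simp: take2_drop intro!: exI[of _ "fst (w ! p)"] prod_eqI)
            next
              case q5: False
              show ?thesis
              proof (cases "q = 6")
                case True
                then obtain t where "l = 1" "1 \<le> m" "m \<le> pc_n P" "p < length w" "w ! p = (m, False)"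
                  "pc_r P m = enat t" "rhs = replicate (t - 1) (m, True) @ gvec P m (pc_f P m)"
                  using R by auto
                then have "(m, p, q, l, rhs) \<in> {(i, p, 6, 1, replicate (t - 1) (i, True) @ gvec P i (pc_f P i)) | i p t. 1 \<le> i \<and> i \<le> pc_n P \<and>
          pc_r P i = enat t \<and> take 1 (drop p w) = [(i, False)]}"
                  using True by (auto simp: take1_drop')
                then show ?thesis unfolding cands_def by blast
              next
                case q6: False
                then have "q = 7" using R q1 q2 q3 q4 q5 by auto
                then show ?thesis using R unfolding cands_def
                  by (intro UnI2) (auto simp: take2_drop intro!: exI[of _ "snd (w ! p)"] prod_eqI)
              qed
            qed
          qed
        qed
      qed
    qed
  qed
qed

lemma cands_unique: "(m, p, q, l1, r1) \<in> cands P w \<Longrightarrow> (m, p, q, l2, r2) \<in> cands P w \<Longrightarrow> l1 = l2 \<and> r1 = r2"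
  unfolding cands_nth by auto

definition mpq :: "nat \<times> nat \<times> nat \<times> nat \<times> word \<Rightarrow> nat \<times> nat \<times> nat" where
  "mpq c = (case c of (m, p, q, l, rhs) \<Rightarrow> (m, p, q))"

lemma img_eq: "(\<lambda>(m, p, q, l, rhs). (m, p, q)) ` cands P w = mpq ` cands P w"
  unfolding mpq_def by (rule image_cong) auto

lemma finite_img: "finite (mpq ` cands P w)"
proof (rule finite_subset)
  show "mpq ` cands P w \<subseteq> {..pc_n P} \<times> {..length w} \<times> {..(7::nat)}"
  proof
    fix x assume "x \<in> mpq ` cands P w"
    then obtain m p q l rhs where c: "(m, p, q, l, rhs) \<in> cands P w" and x: "x = (m, p, q)"
      by (auto simp: mpq_def)
    from c show "x \<in> {..pc_n P} \<times> {..length w} \<times> {..(7::nat)}"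
      unfolding cands_nth x by auto
  qed
qed auto

lemma step_cand:
  assumes "collect_step P w = Some w'"
  shows "\<exists>m p q l rhs. (m, p, q, l, rhs) \<in> cands P w \<and> w' = take p w @ rhs @ drop (p + l) w"
proof -
  have ne: "cands P w \<noteq> {}" using assms by (auto simp: collect_step_def split: if_splits)
  obtain m p q where mn: "Min (mpq ` cands P w) = (m, p, q)" by (metis prod_cases3)
  have "(m, p, q) \<in> mpq ` cands P w" using mn[symmetric] finite_img ne by (metis Min_in image_is_empty)
  then obtain l rhs where c: "(m, p, q, l, rhs) \<in> cands P w" by (auto simp: mpq_def)
  have th: "(THE lr. (m, p, q, fst lr, snd lr) \<in> cands P w) = (l, rhs)"
    by (rule the_equality) (use c cands_unique in auto)
  have "collect_step P w = Some (take p w @ rhs @ drop (p + l) w)"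
    unfolding collect_step_def img_eq using ne mn th by simp
  then have "w' = take p w @ rhs @ drop (p + l) w" using assms by simp
  then show ?thesis using c by blast
qed

lemma step_exact:
  assumes c: "(m, p, q, l, rhs) \<in> cands P w"
    and mn: "\<And>m' p' q' l' r'. (m', p', q', l', r') \<in> cands P w \<Longrightarrow> (m, p, q) \<le> (m', p', q')"
  shows "collect_step P w = Some (take p w @ rhs @ drop (p + l) w)"
proof -
  have ne: "cands P w \<noteq> {}" using c by auto
  have m: "Min (mpq ` cands P w) = (m, p, q)"
  proof (rule Min_eqI)
    show "finite (mpq ` cands P w)" by (rule finite_img)
    show "(m, p, q) \<in> mpq ` cands P w" using c by (force simp: mpq_def)
    fix y assume "y \<in> mpq ` cands P w"
    then show "(m, p, q) \<le> y" using mn by (auto simp: mpq_def)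
  qed
  have th: "(THE lr. (m, p, q, fst lr, snd lr) \<in> cands P w) = (l, rhs)"
    by (rule the_equality) (use c cands_unique in auto)
  show ?thesis unfolding collect_step_def img_eq using ne m th by simp
qed

definition key :: "letter \<Rightarrow> nat" where "key a = 2 * fst a + (if snd a then 1 else 0)"

fun splitk :: "nat \<Rightarrow> word \<Rightarrow> word list" where
  "splitk k [] = [[]]"
| "splitk k (a # w) = (if key a = k then [] # splitk k w else (a # hd (splitk k w)) # tl (splitk k w))"

lemma splitk_ne[simp]: "splitk k w \<noteq> []"
  by (induction w) auto

lemma length_splitk: "length (splitk k w) = Suc (length (filter (\<lambda>a. key a = k) w))"
proof (induction w)
  case (Cons a w)
  then show ?case using splitk_ne[of k w] by (cases "splitk k w") auto
qed simp

lemma splitk_app: "splitk k (u @ v) = butlast (splitk k u) @ [last (splitk k u) @ hd (splitk k v)] @ tl (splitk k v)"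
proof (induction u)
  case Nil
  then show ?case using splitk_ne[of k v] by (cases "splitk k v") auto
next
  case (Cons a u)
  obtain x xs where su: "splitk k u = x # xs" using splitk_ne[of k u] by (cases "splitk k u") auto
  show ?case
  proof (cases "key a = k")
    case True
    then show ?thesis using Cons su by simp
  next
    case False
    show ?thesis
    proof (cases "xs = []")
      case True
      then show ?thesis using Cons su False by simp
    next
      case xs: False
      then show ?thesis using Cons su False by simp
    qed
  qed
qed

lemma splitk_nokey: "\<forall>a\<in>set w. key a \<noteq> k \<Longrightarrow> splitk k w = [w]"
  by (induction w) auto

fun wr :: "nat \<Rightarrow> nat \<Rightarrow> (word \<times> word) set" where
  "wr B 0 = {}"
| "wr B (Suc d) = inv_image (lenlex (wr B d)) (splitk (B - Suc d))"

lemma wf_wr: "wf (wr B d)"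
  by (induction d) auto

lemma wr_left: "(v, u) \<in> wr B d \<Longrightarrow> (x @ v, x @ u) \<in> wr B d"
proof (induction d arbitrary: x v u)
  case 0
  then show ?case by simp
next
  case (Suc d)
  define k where "k = B - Suc d"
  have h: "(splitk k v, splitk k u) \<in> lenlex (wr B d)" using Suc.prems by (simp add: k_def)
  have goal: "(splitk k (x @ v), splitk k (x @ u)) \<in> lenlex (wr B d)"
  proof (cases "length (splitk k v) < length (splitk k u)")
    case True
    then show ?thesis by (simp add: lenlex_conv length_splitk)
  next
    case False
    with h obtain xys a b xs' ys' where sv: "splitk k v = xys @ a # xs'" and su: "splitk k u = xys @ b # ys'"
      and ab: "(a, b) \<in> wr B d" and len: "length xs' = length ys'"
      by (auto simp: lenlex_conv lex_conv)
    show ?thesis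
    proof (cases xys)
      case Nil
      have "(last (splitk k x) @ a, last (splitk k x) @ b) \<in> wr B d" using Suc.IH ab by blast
      then show ?thesis using sv su Nil len
        by (simp add: splitk_app lenlex_conv lex_conv) (metis append.assoc)
    next
      case (Cons c xys')
      then show ?thesis using sv su len ab
        by (simp add: splitk_app lenlex_conv lex_conv) (metis append.assoc append_Cons)
    qed
  qed
  then show ?case by (simp add: k_def)
qed

lemma wr_right: "(v, u) \<in> wr B d \<Longrightarrow> (v @ y, u @ y) \<in> wr B d"
proof (induction d arbitrary: y v u)
  case 0
  then show ?case by simp
next
  case (Suc d)
  define k where "k = B - Suc d"
  have h: "(splitk k v, splitk k u) \<in> lenlex (wr B d)" using Suc.prems by (simp add: k_def)
  define H where "H = hd (splitk k y)"
  define T where "T = tl (splitk k y)"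
  have goal: "(splitk k (v @ y), splitk k (u @ y)) \<in> lenlex (wr B d)"
  proof (cases "length (splitk k v) < length (splitk k u)")
    case True
    then show ?thesis by (simp add: lenlex_conv length_splitk)
  next
    case False
    with h obtain xys a b xs' ys' where sv: "splitk k v = xys @ a # xs'" and su: "splitk k u = xys @ b # ys'"
      and ab: "(a, b) \<in> wr B d" and len: "length xs' = length ys'"
      by (auto simp: lenlex_conv lex_conv)
    show ?thesis
    proof (cases "xs' = []")
      case True
      then have ys: "ys' = []" using len by simp
      have ab': "(a @ H, b @ H) \<in> wr B d" using Suc.IH ab by blast
      have e1: "splitk k (v @ y) = xys @ (a @ H) # T" using sv True by (simp add: splitk_app H_def T_def)
      have e2: "splitk k (u @ y) = xys @ (b @ H) # T" using su ys by (simp add: splitk_app H_def T_def)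
      have "(xys @ (a @ H) # T, xys @ (b @ H) # T) \<in> lex (wr B d)"
        unfolding lex_conv using ab' by auto
      then show ?thesis unfolding e1 e2 by (simp add: lenlex_conv)
    next
      case False
      then have ys: "ys' \<noteq> []" using len by auto
      have e1: "splitk k (v @ y) = xys @ a # (butlast xs' @ (last xs' @ H) # T)"
        using sv False by (simp add: splitk_app H_def T_def butlast_append)
      have e2: "splitk k (u @ y) = xys @ b # (butlast ys' @ (last ys' @ H) # T)"
        using su ys by (simp add: splitk_app H_def T_def butlast_append)
      have "(xys @ a # (butlast xs' @ (last xs' @ H) # T), xys @ b # (butlast ys' @ (last ys' @ H) # T)) \<in> lex (wr B d)"
        unfolding lex_conv using ab len by auto
      then show ?thesis unfolding e1 e2 using len by (simp add: lenlex_conv)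
    qed
  qed
  then show ?case by (simp add: k_def)
qed

lemma wr_compat: "(v, u) \<in> wr B d \<Longrightarrow> (x @ v @ y, x @ u @ y) \<in> wr B d"
  using wr_left wr_right by blast

lemma wr_lift1: "(v, u) \<in> wr B d \<Longrightarrow> \<forall>a\<in>set v \<union> set u. key a \<noteq> B - Suc d \<Longrightarrow> (v, u) \<in> wr B (Suc d)"
  by (simp add: splitk_nokey lenlex_conv lex_conv) (metis append.left_neutral)

lemma wr_lift: "(v, u) \<in> wr B d \<Longrightarrow> d \<le> d' \<Longrightarrow> d' \<le> B \<Longrightarrow> \<forall>a\<in>set v \<union> set u. B - d \<le> key a \<Longrightarrow> (v, u) \<in> wr B d'"
proof (induction d')
  case 0
  then show ?case by simp
next
  case (Suc d'')
  show ?case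
  proof (cases "d = Suc d''")
    case True
    then show ?thesis using Suc by simp
  next
    case False
    then have "(v, u) \<in> wr B d''" using Suc by simp
    moreover have "\<forall>a\<in>set v \<union> set u. key a \<noteq> B - Suc d''"
    proof
      fix a assume "a \<in> set v \<union> set u"
      then have "B - d \<le> key a" using Suc.prems by blast
      moreover have "d \<le> d''" "Suc d'' \<le> B" using Suc.prems False by auto
      ultimately show "key a \<noteq> B - Suc d''" by linarith
    qed
    ultimately show ?thesis by (rule wr_lift1)
  qed
qed

lemma wr_nonempty: "w \<noteq> [] \<Longrightarrow> \<forall>a\<in>set w. B - d \<le> key a \<and> key a < B \<Longrightarrow> ([], w) \<in> wr B d"
proof (induction d)
  case 0
  then show ?case by (cases w) auto
next
  case (Suc d)
  show ?case
  proof (cases "\<exists>a\<in>set w. key a = B - Suc d")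
    case True
    then have "length (filter (\<lambda>a. key a = B - Suc d) w) > 0" by (auto simp: filter_empty_conv)
    then show ?thesis by (simp add: lenlex_conv length_splitk)
  next
    case False
    then have "([], w) \<in> wr B d" using Suc by (intro Suc.IH) fastforce+
    then show ?thesis using False by (simp add: splitk_nokey lenlex_conv lex_conv) (metis append.left_neutral)
  qed
qed

lemma rule_top:
  assumes "k < B" "(splitk k rhs, splitk k lhs) \<in> lenlex (wr B (B - Suc k))"
    "\<forall>a\<in>set rhs \<union> set lhs. k \<le> key a"
  shows "(rhs, lhs) \<in> wr B B"
proof -
  have kk: "B - Suc (B - Suc k) = k" using assms(1) by simp
  have "(rhs, lhs) \<in> wr B (Suc (B - Suc k))" using assms(2) unfolding wr.simps kk by simp
  then show ?thesis by (rule wr_lift) (use assms in auto)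
qed

lemma rule_count:
  assumes "k < B" "\<forall>a\<in>set rhs. k < key a" "\<forall>a\<in>set lhs. k \<le> key a" "\<exists>a\<in>set lhs. key a = k"
  shows "(rhs, lhs) \<in> wr B B"
proof (rule rule_top[OF assms(1)])
  have "length (filter (\<lambda>a. key a = k) rhs) = 0" using assms(2) by (auto simp: filter_empty_conv)
  moreover have "length (filter (\<lambda>a. key a = k) lhs) > 0" using assms(4) by (auto simp: filter_empty_conv)
  ultimately show "(splitk k rhs, splitk k lhs) \<in> lenlex (wr B (B - Suc k))"
    by (simp add: lenlex_conv length_splitk)
  show "\<forall>a\<in>set rhs \<union> set lhs. k \<le> key a" using assms(2,3) by fastforce
qed

lemma rule_swap:
  assumes "key b < B" "key b < key c" "key c < B" "\<forall>a\<in>set r. key b < key a \<and> key a < B"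
  shows "(b # r, [c, b]) \<in> wr B B"
proof (rule rule_top[OF assms(1)])
  have "([], [c]) \<in> wr B (B - Suc (key b))" by (rule wr_nonempty) (use assms in auto)
  moreover have "splitk (key b) r = [r]" using assms(4) by (intro splitk_nokey) auto
  ultimately show "(splitk (key b) (b # r), splitk (key b) [c, b]) \<in> lenlex (wr B (B - Suc (key b)))"
    using assms by (simp add: lenlex_conv lex_conv) (metis append.left_neutral)
  show "\<forall>a\<in>set (b # r) \<union> set [c, b]. key b \<le> key a" using assms by auto
qed

lemma key_gvec: "a \<in> set (gvec P i v) \<Longrightarrow> 2 * i + 1 < key a \<and> key a < 2 * pc_n P + 2"
  using set_gvec[of a P i v] by (auto simp: key_def)

lemma key_gvec_all: "\<forall>a\<in>set (gvec P i v). 2 * i + 1 < key a \<and> key a < 2 * pc_n P + 2"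
  using key_gvec by blast

lemma swap_case:
  assumes "w ! p = (j, sj)" "w ! Suc p = (m, sm)" "Suc p < length w" "m < j" "j \<le> pc_n P"
  shows "((m, sm) # gvec P m v, take 2 (drop p w)) \<in> wr (2 * pc_n P + 2) (2 * pc_n P + 2)"
proof -
  have t: "take 2 (drop p w) = [(j, sj), (m, sm)]" using assms by (simp add: take2_drop)
  show ?thesis unfolding t
  proof (rule rule_swap)
    show "key (m, sm) < 2 * pc_n P + 2" "key (m, sm) < key (j, sj)" "key (j, sj) < 2 * pc_n P + 2"
      using assms by (auto simp: key_def)
    show "\<forall>a\<in>set (gvec P m v). key (m, sm) < key a \<and> key a < 2 * pc_n P + 2"
      using key_gvec_all[of P m v] by (auto simp: key_def)
  qed
qed

lemma step_dec:
  assumes valid: "pcp_valid P" and st: "collect_step P w = Some w'"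
  shows "(w', w) \<in> wr (2 * pc_n P + 2) (2 * pc_n P + 2)"
proof -
  define B where "B = 2 * pc_n P + 2"
  obtain m p q l rhs where c: "(m, p, q, l, rhs) \<in> cands P w" and w': "w' = take p w @ rhs @ drop (p + l) w"
    using step_cand[OF st] by blast
  have e0: "take l (drop p w) @ drop (p + l) w = drop p w"
    by (metis append_take_drop_id drop_drop add.commute)
  have wdec: "take p w @ take l (drop p w) @ drop (p + l) w = w"
    using e0 by simp
  have "(rhs, take l (drop p w)) \<in> wr B B"
  proof -
    note cc = c[unfolded cands_nth]
    consider (k1) "q = 1" | (k2) "q = 2" | (k3) "q = 3" | (k4) "q = 4" | (k5) "q = 5" | (k6) "q = 6" | (k7) "q = 7"
      using cc by blast
    then show ?thesis
    proof cases
      case k1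
      then have h: "1 \<le> m" "m \<le> pc_n P" "pc_r P m = enat l" "p + l \<le> length w" "\<forall>k<l. w ! (p + k) = (m, True)"
        "rhs = gvec P m (pc_e P m)" using cc by auto
      have "pc_r P m \<noteq> enat 0" using valid h unfolding pcp_valid_def zero_enat_def[symmetric] by auto
      then have "l \<noteq> 0" using h by auto
      have lhs: "take l (drop p w) = replicate l (m, True)" using h by (simp add: taket_drop)
      show ?thesis unfolding lhs
      proof (rule rule_count[of "2 * m + 1"])
        show "2 * m + 1 < B" using h by (simp add: B_def)
        show "\<forall>a\<in>set rhs. 2 * m + 1 < key a" using h key_gvec_all[of P m] by auto
        show "\<forall>a\<in>set (replicate l (m, True)). 2 * m + 1 \<le> key a" by (simp add: key_def)
        show "\<exists>a\<in>set (replicate l (m, True)). key a = 2 * m + 1" using \<open>l \<noteq> 0\<close> by (simp add: key_def)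
      qed
    next
      case k6
      then obtain t where h: "l = 1" "1 \<le> m" "m \<le> pc_n P" "p < length w" "w ! p = (m, False)"
        "rhs = replicate (t - 1) (m, True) @ gvec P m (pc_f P m)" using cc by auto
      have lhs: "take l (drop p w) = [(m, False)]" using h by (simp add: take1_drop')
      show ?thesis unfolding lhs
      proof (rule rule_count[of "2 * m"])
        show "2 * m < B" using h by (simp add: B_def)
        show "\<forall>a\<in>set rhs. 2 * m < key a"
        proof
          fix a assume "a \<in> set rhs"
          then have "a = (m, True) \<or> a \<in> set (gvec P m (pc_f P m))" using h by (auto split: if_splits)
          then show "2 * m < key a" using key_gvec[of a P m "pc_f P m"] by (auto simp: key_def)
        qed
        show "\<forall>a\<in>set [(m, False)]. 2 * m \<le> key a" by (simp add: key_def)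
        show "\<exists>a\<in>set [(m, False)]. key a = 2 * m" by (simp add: key_def)
      qed
    next
      case k7
      then have h: "l = 2" "1 \<le> m" "m \<le> pc_n P" "Suc p < length w" "fst (w ! p) = m" "w ! Suc p = (m, \<not> snd (w ! p))"
        "rhs = []" using cc by auto
      have t: "take 2 (drop p w) = [(m, snd (w ! p)), (m, \<not> snd (w ! p))]"
        using h by (simp add: take2_drop prod_eq_iff)
      show ?thesis unfolding h(1) t h(7)
        by (rule wr_nonempty) (use h in \<open>auto simp: B_def key_def\<close>)
    next
      case k2
      then have h: "l = 2" "Suc p < length w" "w ! Suc p = (m, True)" "m < fst (w ! p)"
        "fst (w ! p) \<le> pc_n P" "rhs = (m, True) # gvec P m (pc_a P m (fst (w ! p)))" using cc by auto
      show ?thesis unfolding h(1) h(6) B_def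
        by (rule swap_case[of w p _ "snd (w ! p)"]) (use h in auto)
    next
      case k3
      then have h: "l = 2" "Suc p < length w" "w ! Suc p = (m, False)" "m < fst (w ! p)"
        "fst (w ! p) \<le> pc_n P" "rhs = (m, False) # gvec P m (pc_b P m (fst (w ! p)))" using cc by auto
      show ?thesis unfolding h(1) h(6) B_def
        by (rule swap_case[of w p _ "snd (w ! p)"]) (use h in auto)
    next
      case k4
      then have h: "l = 2" "Suc p < length w" "w ! Suc p = (m, True)" "m < fst (w ! p)"
        "fst (w ! p) \<le> pc_n P" "rhs = (m, True) # gvec P m (pc_c P m (fst (w ! p)))" using cc by auto
      show ?thesis unfolding h(1) h(6) B_def
        by (rule swap_case[of w p _ "snd (w ! p)"]) (use h in auto)
    next
      case k5
      then have h: "l = 2" "Suc p < length w" "w ! Suc p = (m, False)" "m < fst (w ! p)"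
        "fst (w ! p) \<le> pc_n P" "rhs = (m, False) # gvec P m (pc_d P m (fst (w ! p)))" using cc by auto
      show ?thesis unfolding h(1) h(6) B_def
        by (rule swap_case[of w p _ "snd (w ! p)"]) (use h in auto)
    qed
  qed
  then have "(take p w @ rhs @ drop (p + l) w, take p w @ take l (drop p w) @ drop (p + l) w) \<in> wr B B"
    by (rule wr_compat)
  then show ?thesis unfolding wdec w'[symmetric] B_def .
qed

abbreviation stp :: "pcp \<Rightarrow> word \<Rightarrow> word \<Rightarrow> bool" where
  "stp P x y \<equiv> collect_step P x = Some y"

lemma terminates:
  assumes "pcp_valid P"
  shows "\<exists>v. (stp P)\<^sup>*\<^sup>* w v \<and> collect_step P v = None"
proof (induction w rule: wf_induct[OF wf_wr[of "2 * pc_n P + 2" "2 * pc_n P + 2"]])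
  case (1 w)
  show ?case
  proof (cases "collect_step P w")
    case None
    then show ?thesis by blast
  next
    case (Some w')
    then have "(w', w) \<in> wr (2 * pc_n P + 2) (2 * pc_n P + 2)" by (rule step_dec[OF assms])
    then have "\<exists>v. (stp P)\<^sup>*\<^sup>* w' v \<and> collect_step P v = None" using 1 by simp
    then obtain v where v: "(stp P)\<^sup>*\<^sup>* w' v" "collect_step P v = None" by blast
    have "(stp P)\<^sup>*\<^sup>* w v" using Some v(1) by (rule converse_rtranclp_into_rtranclp)
    then show ?thesis using v(2) by blast
  qed
qed

lemma det_terminal: "(stp P)\<^sup>*\<^sup>* w v \<Longrightarrow> collect_step P v = None \<Longrightarrow> (stp P)\<^sup>*\<^sup>* w v' \<Longrightarrow>
  collect_step P v' = None \<Longrightarrow> v = v'"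
proof (induction arbitrary: v' rule: converse_rtranclp_induct)
  case base
  from base(2) show ?case
  proof (cases rule: converse_rtranclpE)
    case base
    then show ?thesis by simp
  next
    case (step z)
    then have False using \<open>collect_step P v = None\<close> by simp
    then show ?thesis ..
  qed
next
  case (step y z)
  from step.prems(2) show ?case
  proof (cases rule: converse_rtranclpE)
    case base
    then have False using step.prems(3) step.hyps(1) by simp
    then show ?thesis ..
  next
    case (step z')
    then have "z' = z" using \<open>stp P y z\<close> by simp
    then have "(stp P)\<^sup>*\<^sup>* z v'" using step(2) by simp
    then show ?thesis using step.IH[OF \<open>collect_step P v = None\<close>] \<open>collect_step P v' = None\<close> by blast
  qed
qed

lemma collect_eq: "pcp_valid P \<Longrightarrow> (stp P)\<^sup>*\<^sup>* w v \<Longrightarrow> collect_step P v = None \<Longrightarrow> collect P w = v"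
  unfolding collect_def by (rule the_equality) (use det_terminal in blast)+

lemma collect_stepI: "pcp_valid P \<Longrightarrow> collect_step P w = Some w' \<Longrightarrow> collect P w = collect P w'"
proof -
  assume v: "pcp_valid P" and s: "collect_step P w = Some w'"
  obtain T where T: "(stp P)\<^sup>*\<^sup>* w' T" "collect_step P T = None" using terminates[OF v] by blast
  then have "(stp P)\<^sup>*\<^sup>* w T" using s by (meson converse_rtranclp_into_rtranclp)
  then show ?thesis using collect_eq[OF v] T by metis
qed

lemma cands_shift: "(m, p, q, l, rhs) \<in> cands P Y \<Longrightarrow> (m, Suc p, q, l, rhs) \<in> cands P (a # Y)"
  unfolding cands_nth by auto

lemma cands_shift_ne: "cands P (a # Y) = {} \<Longrightarrow> cands P Y = {}"
proof (rule ccontr)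
  assume "cands P (a # Y) = {}" "cands P Y \<noteq> {}"
  then obtain m p q l rhs where "(m, p, q, l, rhs) \<in> cands P Y" by (metis ex_in_conv prod_cases5)
  then show False using cands_shift \<open>cands P (a # Y) = {}\<close> by blast
qed

lemma descent_cand:
  assumes "Suc p < length w" "w ! p = (i, s)" "w ! Suc p = (k, s')" "1 \<le> k" "k < i" "i \<le> pc_n P"
  shows "cands P w \<noteq> {}"
proof (cases "\<not> s' \<and> pc_r P k \<noteq> \<infinity>")
  case True
  then obtain t where t: "pc_r P k = enat t" by auto
  have "(k, Suc p, 6, 1, replicate (t - 1) (k, True) @ gvec P k (pc_f P k)) \<in> cands P w"
    unfolding cands_nth using assms True t by auto
  then show ?thesis by blast
next
  case c1: False
  show ?thesis
  proof (cases "\<not> s \<and> pc_r P i \<noteq> \<infinity>")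
    case True
    then obtain t where t: "pc_r P i = enat t" by auto
    have "(i, p, 6, 1, replicate (t - 1) (i, True) @ gvec P i (pc_f P i)) \<in> cands P w"
      unfolding cands_nth using assms True t by auto
    then show ?thesis by blast
  next
    case c2: False
    show ?thesis
    proof (cases s)
      case True
      show ?thesis
      proof (cases s')
        case True
        have "(k, p, 2, 2, (k, True) # gvec P k (pc_a P k i)) \<in> cands P w"
          unfolding cands_nth using assms True \<open>s\<close> by auto
        then show ?thesis by blast
      next
        case False
        have "(k, p, 3, 2, (k, False) # gvec P k (pc_b P k i)) \<in> cands P w"
          unfolding cands_nth using assms False \<open>s\<close> c1 by auto
        then show ?thesis by blast
      qed
    next
      case False
      show ?thesis
      proof (cases s')
        case True
        have "(k, p, 4, 2, (k, True) # gvec P k (pc_c P k i)) \<in> cands P w"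
          unfolding cands_nth using assms True \<open>\<not> s\<close> c2 by auto
        then show ?thesis by blast
      next
        case f: False
        have "(k, p, 5, 2, (k, False) # gvec P k (pc_d P k i)) \<in> cands P w"
          unfolding cands_nth using assms f \<open>\<not> s\<close> c1 c2 by auto
        then show ?thesis by blast
      qed
    qed
  qed
qed

definition rf :: "pcp \<Rightarrow> nat \<Rightarrow> (nat \<Rightarrow> int) \<Rightarrow> word" where
  "rf P lv x = concat (map (\<lambda>i. gpow i (x i)) [lv..<Suc (pc_n P)])"

lemma gpow_0[simp]: "gpow k 0 = []"
  by (simp add: gpow_def)

lemma gpow_ne: "x \<noteq> 0 \<Longrightarrow> gpow k x = (k, 0 \<le> x) # gpow k (if 0 \<le> x then x - 1 else x + 1)"
proof (cases "0 \<le> x")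
  case True
  assume "x \<noteq> 0"
  then have n: "nat x = Suc (nat (x - 1))" using True by linarith
  show ?thesis using True \<open>x \<noteq> 0\<close> unfolding gpow_def n by simp
next
  case False
  then have n: "nat (- x) = Suc (nat (- (x + 1)))" by linarith
  show ?thesis
  proof (cases "x = -1")
    case True
    then show ?thesis unfolding gpow_def by simp
  next
    case False
    then have "\<not> 0 \<le> x + 1" using \<open>\<not> 0 \<le> x\<close> by linarith
    then show ?thesis using \<open>\<not> 0 \<le> x\<close> unfolding gpow_def n by simp
  qed
qed

lemma gpow_plus: "0 \<le> x \<Longrightarrow> gpow k (x + 1) = (k, True) # gpow k x"
  using gpow_ne[of "x + 1" k] by simp

lemma gpow_minus: "x \<le> 0 \<Longrightarrow> gpow k (x - 1) = (k, False) # gpow k x"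
  using gpow_ne[of "x - 1" k] by simp

lemma concat_zero: "(\<forall>k\<in>set ks. x k = 0) \<Longrightarrow> concat (map (\<lambda>i. gpow i (x i)) ks) = []"
  by (induction ks) auto

lemma rf_split: "lv \<le> i \<Longrightarrow> i \<le> pc_n P \<Longrightarrow>
  rf P lv x = concat (map (\<lambda>i. gpow i (x i)) [lv..<i]) @ gpow i (x i) @ concat (map (\<lambda>i. gpow i (x i)) [Suc i..<Suc (pc_n P)])"
proof -
  assume a: "lv \<le> i" "i \<le> pc_n P"
  have e1: "[lv..<Suc (pc_n P)] = [lv..<i] @ [i..<Suc (pc_n P)]"
    using a upt_add_eq_append[of lv i "Suc (pc_n P) - i"] by simp
  have e2: "[i..<Suc (pc_n P)] = i # [Suc i..<Suc (pc_n P)]"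
    using a by (intro upt_conv_Cons) auto
  have "[lv..<Suc (pc_n P)] = [lv..<i] @ i # [Suc i..<Suc (pc_n P)]" using e1 e2 by simp
  then show ?thesis unfolding rf_def by simp
qed

lemma rf_head: "lv \<le> i \<Longrightarrow> i \<le> pc_n P \<Longrightarrow> (\<forall>k. lv \<le> k \<and> k < i \<longrightarrow> x k = 0) \<Longrightarrow>
  rf P lv x = gpow i (x i) @ concat (map (\<lambda>i. gpow i (x i)) [Suc i..<Suc (pc_n P)])"
  using rf_split[of lv i P x] concat_zero[of "[lv..<i]" x] by auto

lemma in_range_0: "pcp_valid P \<Longrightarrow> 1 \<le> i \<Longrightarrow> i \<le> pc_n P \<Longrightarrow> in_range P i 0"
proof -
  assume "pcp_valid P" "1 \<le> i" "i \<le> pc_n P"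
  then have "pc_r P i \<noteq> enat 0" unfolding pcp_valid_def zero_enat_def[symmetric] by auto
  then show ?thesis unfolding in_range_def by auto
qed

lemma reduced_noc:
  assumes valid: "pcp_valid P" and lv: "1 \<le> lv"
  shows "Y \<in> lists (alph P lv) \<Longrightarrow> cands P Y = {} \<Longrightarrow>
    \<exists>x. Y = rf P lv x \<and> (\<forall>i\<in>{lv..pc_n P}. in_range P i (x i))"
proof (induction Y)
  case Nil
  have "[] = rf P lv (\<lambda>_. 0)" by (simp add: rf_def concat_zero)
  moreover have "\<forall>i\<in>{lv..pc_n P}. in_range P i 0" using in_range_0[OF valid] lv by auto
  ultimately show ?case by blast
next
  case (Cons a Y)
  obtain i s where a: "a = (i, s)" by (cases a)
  have ai: "lv \<le> i" "i \<le> pc_n P" using Cons.prems a by (auto simp: alph_def)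
  have "cands P Y = {}" using Cons.prems cands_shift_ne by blast
  then obtain x where x: "Y = rf P lv x" "\<forall>i\<in>{lv..pc_n P}. in_range P i (x i)"
    using Cons by auto
  define R where "R = concat (map (\<lambda>i. gpow i (x i)) [Suc i..<Suc (pc_n P)])"
  have A: "\<forall>k. lv \<le> k \<and> k < i \<longrightarrow> x k = 0"
  proof (rule ccontr)
    assume "\<not> (\<forall>k. lv \<le> k \<and> k < i \<longrightarrow> x k = 0)"
    then have ex: "\<exists>k. lv \<le> k \<and> k < i \<and> x k \<noteq> 0" by blast
    define k0 where "k0 = (LEAST k. lv \<le> k \<and> k < i \<and> x k \<noteq> 0)"
    have k0: "lv \<le> k0" "k0 < i" "x k0 \<noteq> 0"
      using LeastI_ex[OF ex] unfolding k0_def by auto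
    have below: "\<forall>k. lv \<le> k \<and> k < k0 \<longrightarrow> x k = 0"
      using k0 not_less_Least unfolding k0_def by fastforce
    have Yh: "Y = gpow k0 (x k0) @ concat (map (\<lambda>i. gpow i (x i)) [Suc k0..<Suc (pc_n P)])"
      using x(1) rf_head[of lv k0 P x] k0 ai below by auto
    then have "Y = (k0, 0 \<le> x k0) # (gpow k0 (if 0 \<le> x k0 then x k0 - 1 else x k0 + 1) @
          concat (map (\<lambda>i. gpow i (x i)) [Suc k0..<Suc (pc_n P)]))"
      using gpow_ne[OF k0(3)] by simp
    then have "cands P (a # Y) \<noteq> {}"
      using descent_cand[of 0 "a # Y" i s k0 "0 \<le> x k0" P] a k0 ai lv by auto
    then show False using Cons.prems by simp
  qed
  have Yi: "Y = gpow i (x i) @ R"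
    using x(1) rf_head[of lv i P x] A ai unfolding R_def by auto
  have B: "x i \<noteq> 0 \<Longrightarrow> s = (0 \<le> x i)"
  proof (rule ccontr)
    assume nz: "x i \<noteq> 0" and ne: "s \<noteq> (0 \<le> x i)"
    have "Y = (i, 0 \<le> x i) # (gpow i (if 0 \<le> x i then x i - 1 else x i + 1) @ R)"
      using Yi gpow_ne[OF nz] by simp
    then have "(i, 0, 7, 2, []) \<in> cands P (a # Y)"
      unfolding cands_nth using a ai lv ne by auto
    then show False using Cons.prems by simp
  qed
  have C: "\<not> s \<Longrightarrow> pc_r P i = \<infinity>"
  proof (rule ccontr)
    assume "\<not> s" "pc_r P i \<noteq> \<infinity>"
    then obtain t where t: "pc_r P i = enat t" by auto
    have "(i, 0, 6, 1, replicate (t - 1) (i, True) @ gvec P i (pc_f P i)) \<in> cands P (a # Y)"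
      unfolding cands_nth using a ai lv t \<open>\<not> s\<close> by auto
    then show False using Cons.prems by simp
  qed
  show ?case
  proof (cases s)
    case True
    then have xi: "0 \<le> x i" using B by force
    have D: "in_range P i (x i + 1)"
      unfolding in_range_def
    proof (intro allI impI)
      fix t assume t: "pc_r P i = enat t"
      have r: "0 \<le> x i \<and> x i < int t" using x(2) ai t unfolding in_range_def by auto
      show "0 \<le> x i + 1 \<and> x i + 1 < int t"
      proof (rule ccontr)
        assume "\<not> (0 \<le> x i + 1 \<and> x i + 1 < int t)"
        then have tt: "int t = x i + 1" using r by auto
        have tn: "t = Suc (nat (x i))" using tt xi by linarith
        have "a # Y = replicate t (i, True) @ R"
          using Yi a True xi unfolding gpow_def tn by simp
        then have "(i, 0, 1, t, gvec P i (pc_e P i)) \<in> cands P (a # Y)"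
          unfolding cands_nth using ai lv t by (simp add: nth_append)
        then show False using Cons.prems by simp
      qed
    qed
    define x' where "x' = x(i := x i + 1)"
    have "a # Y = rf P lv x'"
    proof -
      have "rf P lv x' = gpow i (x' i) @ concat (map (\<lambda>k. gpow k (x' k)) [Suc i..<Suc (pc_n P)])"
        using rf_head[of lv i P x'] A ai unfolding x'_def by auto
      also have "concat (map (\<lambda>k. gpow k (x' k)) [Suc i..<Suc (pc_n P)]) = R"
        unfolding R_def x'_def by (intro arg_cong[where f=concat] map_cong) auto
      also have "gpow i (x' i) = (i, True) # gpow i (x i)" using gpow_plus[OF xi, of i] by (simp add: x'_def)
      finally have "rf P lv x' = (i, True) # gpow i (x i) @ R" by simp
      then show ?thesis using Yi a True by simp
    qed
    moreover have "\<forall>k\<in>{lv..pc_n P}. in_range P k (x' k)" using x(2) D unfolding x'_def by auto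
    ultimately show ?thesis by blast
  next
    case False
    then have xi: "x i \<le> 0" using B by force
    have D: "in_range P i (x i - 1)" using C False unfolding in_range_def by auto
    define x' where "x' = x(i := x i - 1)"
    have "a # Y = rf P lv x'"
    proof -
      have "rf P lv x' = gpow i (x' i) @ concat (map (\<lambda>k. gpow k (x' k)) [Suc i..<Suc (pc_n P)])"
        using rf_head[of lv i P x'] A ai unfolding x'_def by auto
      also have "concat (map (\<lambda>k. gpow k (x' k)) [Suc i..<Suc (pc_n P)]) = R"
        unfolding R_def x'_def by (intro arg_cong[where f=concat] map_cong) auto
      also have "gpow i (x' i) = (i, False) # gpow i (x i)" using gpow_minus[OF xi, of i] by (simp add: x'_def)
      finally have "rf P lv x' = (i, False) # gpow i (x i) @ R" by simp
      then show ?thesis using Yi a False by simp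
    qed
    moreover have "\<forall>k\<in>{lv..pc_n P}. in_range P k (x' k)" using x(2) D unfolding x'_def by auto
    ultimately show ?thesis by blast
  qed
qed

definition DR :: "pcp \<Rightarrow> nat \<Rightarrow> bool" where
  "DR P lv = ((\<forall>i j. lv \<le> i \<and> i < j \<and> j \<le> pc_n P \<longrightarrow>
      (pc_r P j = \<infinity> \<longrightarrow> pc_eq P lv [(j, False), (i, True)] ((i, True) # gvec P i (pc_c P i j))) \<and>
      (pc_r P i = \<infinity> \<and> pc_r P j = \<infinity> \<longrightarrow> pc_eq P lv [(j, False), (i, False)] ((i, False) # gvec P i (pc_d P i j)))) \<and>
    (\<forall>i t. lv \<le> i \<and> i \<le> pc_n P \<and> pc_r P i = enat t \<longrightarrow>
      pc_eq P lv [(i, False)] (replicate (t - 1) (i, True) @ gvec P i (pc_f P i))))"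

lemma DR2: "pcp_derived P \<Longrightarrow> DR P 2"
  unfolding DR_def pcp_derived_def by blast

lemma rel0: "(u, v) \<in> rels P k \<Longrightarrow> pc_eq P k u v"
  using pc_eq.rel[of u v P k "[]" "[]"] by simp

lemma nth_in_alph: "Y \<in> lists (alph P lv) \<Longrightarrow> k < length Y \<Longrightarrow> lv \<le> fst (Y ! k) \<and> fst (Y ! k) \<le> pc_n P"
  by (auto simp: alph_def dest!: nth_mem split: prod.splits)

lemma step_level:
  assumes valid: "pcp_valid P" and lv: "1 \<le> lv" and Y: "Y \<in> lists (alph P lv)" and dr: "DR P lv"
    and c: "(m, p, q, l, rhs) \<in> cands P Y"
  shows "take p Y @ rhs @ drop (p + l) Y \<in> lists (alph P lv) \<and> pc_eq P lv Y (take p Y @ rhs @ drop (p + l) Y)"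
proof -
  have e0: "take l (drop p Y) @ drop (p + l) Y = drop p Y"
    by (metis append_take_drop_id drop_drop add.commute)
  have wdec: "take p Y @ take l (drop p Y) @ drop (p + l) Y = Y"
    using e0 by simp
  have tp: "take p Y \<in> lists (alph P lv)" using Y by (meson in_lists_conv_set in_set_takeD)
  have dp: "drop (p + l) Y \<in> lists (alph P lv)" using Y by (meson in_lists_conv_set in_set_dropD)
  have t2: "Suc p < length Y \<Longrightarrow> take 2 (drop p Y) = [Y ! p, Y ! Suc p]" by (simp add: take2_drop)
  note cc = c[unfolded cands_nth]
  have lr: "pc_eq P lv (take l (drop p Y)) rhs"
  proof -
    consider (k1) "q = 1" | (k2) "q = 2" | (k3) "q = 3" | (k4) "q = 4" | (k5) "q = 5" | (k6) "q = 6" | (k7) "q = 7"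
      using cc by blast
    then show ?thesis
    proof cases
      case k1
      then have h: "1 \<le> m" "m \<le> pc_n P" "pc_r P m = enat l" "p + l \<le> length Y" "\<forall>k<l. Y ! (p + k) = (m, True)"
        "rhs = gvec P m (pc_e P m)" using cc by auto
      have "pc_r P m \<noteq> enat 0" using valid h unfolding pcp_valid_def zero_enat_def[symmetric] by auto
      then have "l \<noteq> 0" using h by auto
      then have "Y ! (p + 0) = (m, True)" "p < length Y" using h by auto
      then have "lv \<le> m" using nth_in_alph[OF Y, of p] by simp
      have lhs: "take l (drop p Y) = replicate l (m, True)" using h by (simp add: taket_drop)
      have "(replicate l (m, True), gvec P m (pc_e P m)) \<in> rels P lv"
        unfolding rels_def using h \<open>lv \<le> m\<close> by blast
      then show ?thesis unfolding lhs h(6) by (rule rel0)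
    next
      case k2
      then have h: "l = 2" "Suc p < length Y" "Y ! Suc p = (m, True)" "snd (Y ! p)" "m < fst (Y ! p)"
        "fst (Y ! p) \<le> pc_n P" "rhs = (m, True) # gvec P m (pc_a P m (fst (Y ! p)))" using cc by auto
      have "lv \<le> m" using nth_in_alph[OF Y h(2)] h by simp
      have lhs: "take l (drop p Y) = [(fst (Y ! p), True), (m, True)]"
        using h t2 by (metis prod.collapse)
      have "([(fst (Y ! p), True), (m, True)], (m, True) # gvec P m (pc_a P m (fst (Y ! p)))) \<in> rels P lv"
        unfolding rels_def using h \<open>lv \<le> m\<close> by blast
      then show ?thesis unfolding lhs h(7) by (rule rel0)
    next
      case k3
      then have h: "l = 2" "Suc p < length Y" "Y ! Suc p = (m, False)" "snd (Y ! p)" "m < fst (Y ! p)"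
        "fst (Y ! p) \<le> pc_n P" "pc_r P m = \<infinity>" "rhs = (m, False) # gvec P m (pc_b P m (fst (Y ! p)))" using cc by auto
      have "lv \<le> m" using nth_in_alph[OF Y h(2)] h by simp
      have lhs: "take l (drop p Y) = [(fst (Y ! p), True), (m, False)]"
        using h t2 by (metis prod.collapse)
      have "([(fst (Y ! p), True), (m, False)], (m, False) # gvec P m (pc_b P m (fst (Y ! p)))) \<in> rels P lv"
        unfolding rels_def using h \<open>lv \<le> m\<close> by blast
      then show ?thesis unfolding lhs h(8) by (rule rel0)
    next
      case k4
      then have h: "l = 2" "Suc p < length Y" "Y ! Suc p = (m, True)" "\<not> snd (Y ! p)" "m < fst (Y ! p)"
        "fst (Y ! p) \<le> pc_n P" "pc_r P (fst (Y ! p)) = \<infinity>" "rhs = (m, True) # gvec P m (pc_c P m (fst (Y ! p)))"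
        using cc by auto
      have "lv \<le> m" using nth_in_alph[OF Y h(2)] h by simp
      have lhs: "take l (drop p Y) = [(fst (Y ! p), False), (m, True)]"
        using h t2 by (metis prod.collapse)
      show ?thesis unfolding lhs h(8) using dr h \<open>lv \<le> m\<close> unfolding DR_def by blast
    next
      case k5
      then have h: "l = 2" "Suc p < length Y" "Y ! Suc p = (m, False)" "\<not> snd (Y ! p)" "m < fst (Y ! p)"
        "fst (Y ! p) \<le> pc_n P" "pc_r P m = \<infinity>" "pc_r P (fst (Y ! p)) = \<infinity>"
        "rhs = (m, False) # gvec P m (pc_d P m (fst (Y ! p)))"
        using cc by auto
      have "lv \<le> m" using nth_in_alph[OF Y h(2)] h by simp
      have lhs: "take l (drop p Y) = [(fst (Y ! p), False), (m, False)]"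
        using h t2 by (metis prod.collapse)
      show ?thesis unfolding lhs h(9) using dr h \<open>lv \<le> m\<close> unfolding DR_def by blast
    next
      case k6
      then obtain t where h: "l = 1" "m \<le> pc_n P" "p < length Y" "Y ! p = (m, False)" "pc_r P m = enat t"
        "rhs = replicate (t - 1) (m, True) @ gvec P m (pc_f P m)" using cc by auto
      have "lv \<le> m" using nth_in_alph[OF Y h(3)] h by simp
      have lhs: "take l (drop p Y) = [(m, False)]" using h by (simp add: take1_drop')
      show ?thesis unfolding lhs h(6) using dr h \<open>lv \<le> m\<close> unfolding DR_def by blast
    next
      case k7
      then have h: "l = 2" "m \<le> pc_n P" "Suc p < length Y" "fst (Y ! p) = m" "Y ! Suc p = (m, \<not> snd (Y ! p))"
        "rhs = []" using cc by auto
      have "lv \<le> m" using nth_in_alph[OF Y, of p] h by simp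
      have lhs: "take l (drop p Y) = [(m, snd (Y ! p)), (m, \<not> snd (Y ! p))]"
        using h t2 by (metis prod.collapse)
      have "pc_eq P lv ([] @ [(m, snd (Y ! p)), (m, \<not> snd (Y ! p))] @ []) ([] @ [])"
        by (rule pc_eq.cancel) (use h \<open>lv \<le> m\<close> in \<open>auto simp: alph_def\<close>)
      then show ?thesis unfolding lhs h(6) by simp
    qed
  qed
  have "pc_eq P lv (take p Y @ take l (drop p Y) @ drop (p + l) Y) (take p Y @ rhs @ drop (p + l) Y)"
    by (rule pc_eq_cong[OF lr tp dp])
  then have "pc_eq P lv Y (take p Y @ rhs @ drop (p + l) Y)" unfolding wdec .
  then show ?thesis using pc_eq_lists by blast
qed

lemma collect_step_None: "collect_step P w = None \<Longrightarrow> cands P w = {}"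
  by (auto simp: collect_step_def split: if_splits prod.splits)

lemma collect_level:
  assumes valid: "pcp_valid P" and lv: "1 \<le> lv" and Y: "Y \<in> lists (alph P lv)" and dr: "DR P lv"
  shows "collect P Y \<in> lists (alph P lv) \<and> pc_eq P lv Y (collect P Y) \<and> reduced_from P lv (collect P Y)"
proof -
  obtain T where T: "(stp P)\<^sup>*\<^sup>* Y T" "collect_step P T = None" using terminates[OF valid] by blast
  have cT: "collect P Y = T" using collect_eq[OF valid T] .
  have inv: "T \<in> lists (alph P lv) \<and> pc_eq P lv Y T"
    using T(1)
  proof (induction rule: rtranclp_induct)
    case base
    then show ?case using Y by (auto intro: pc_eq.refl)
  next
    case (step y z)
    obtain m p q l rhs where c: "(m, p, q, l, rhs) \<in> cands P y" and z: "z = take p y @ rhs @ drop (p + l) y"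
      using step_cand[OF step.hyps(2)] by blast
    have "z \<in> lists (alph P lv) \<and> pc_eq P lv y z" unfolding z
      by (rule step_level[OF valid lv _ dr c]) (use step.IH in blast)
    then show ?case using step.IH by (blast intro: pc_eq.trans)
  qed
  have "cands P T = {}" using T(2) by (rule collect_step_None)
  then obtain x where "T = rf P lv x" "\<forall>i\<in>{lv..pc_n P}. in_range P i (x i)"
    using reduced_noc[OF valid lv] inv by blast
  then have "reduced_from P lv T" unfolding reduced_from_def rf_def by blast
  then show ?thesis using inv cT by simp
qed

lemma reduced_lift:
  assumes valid: "pcp_valid P" and "2 \<le> lv" "lv \<le> Suc (pc_n P)" and r: "reduced_from P lv T"
  shows "reduced_from P 2 T"
proof -
  obtain x where x: "T = rf P lv x" "\<forall>i\<in>{lv..pc_n P}. in_range P i (x i)"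
    using r unfolding reduced_from_def rf_def by blast
  define x' where "x' = (\<lambda>i. if i < lv then 0 else x i)"
  have e1: "[2..<Suc (pc_n P)] = [2..<lv] @ [lv..<Suc (pc_n P)]"
    using assms upt_add_eq_append[of 2 lv "Suc (pc_n P) - lv"] by simp
  have "rf P 2 x' = concat (map (\<lambda>i. gpow i (x' i)) [2..<lv]) @ concat (map (\<lambda>i. gpow i (x' i)) [lv..<Suc (pc_n P)])"
    unfolding rf_def e1 by simp
  also have "concat (map (\<lambda>i. gpow i (x' i)) [2..<lv]) = []"
    by (rule concat_zero) (auto simp: x'_def)
  also have "concat (map (\<lambda>i. gpow i (x' i)) [lv..<Suc (pc_n P)]) = rf P lv x"
    unfolding rf_def x'_def by (intro arg_cong[where f=concat] map_cong) auto
  finally have "T = rf P 2 x'" using x by simp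
  moreover have "\<forall>i\<in>{2..pc_n P}. in_range P i (x' i)"
    using x(2) in_range_0[OF valid] by (auto simp: x'_def)
  ultimately show ?thesis unfolding reduced_from_def rf_def by blast
qed

lemma consistent_unique:
  assumes cons: "consistent_from P 2" and "T1 \<in> lists (alph P 2)" "T2 \<in> lists (alph P 2)"
    "reduced_from P 2 T1" "reduced_from P 2 T2" "pc_eq P 2 T1 T2"
  shows "T1 = T2"
proof -
  have X: "theta P 2 T1 \<in> carrier (pc_group P 2)" using assms by (simp add: theta_carrier)
  have "theta P 2 T1 = theta P 2 T2" using assms theta_eq_iff by blast
  then show ?thesis using cons X assms unfolding consistent_from_def by metis
qed

lemma (in group) conj_inv:
  assumes "x \<in> carrier G" "b \<in> carrier G" "c \<in> carrier G" "x \<otimes> b = b \<otimes> c"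
  shows "inv x \<otimes> b = b \<otimes> inv c"
proof -
  have "b = inv x \<otimes> (b \<otimes> c)" using assms inv_solve_left[of b x "b \<otimes> c"] by simp
  then have "b = inv x \<otimes> b \<otimes> c" using assms by (simp add: m_assoc)
  then show ?thesis using assms inv_solve_right[of "inv x \<otimes> b" b c] by simp
qed

lemma (in group) pow_inv:
  assumes "b \<in> carrier G" "c \<in> carrier G" "b [^] (t::nat) = c" "t \<noteq> 0"
  shows "inv b = b [^] (t - 1) \<otimes> inv c"
proof -
  have c: "c = b \<otimes> b [^] (t - 1)" using assms nat_pow_Suc2[of b "t - 1"] by simp
  have "b [^] (t - 1) \<otimes> inv c = b [^] (t - 1) \<otimes> (inv (b [^] (t - 1)) \<otimes> inv b)"
    using assms by (simp add: c inv_mult_group)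
  also have "\<dots> = inv b" using assms by (simp add: m_assoc[symmetric])
  finally show ?thesis by simp
qed

lemma lists_mono: "k \<le> k' \<Longrightarrow> w \<in> lists (alph P k') \<Longrightarrow> w \<in> lists (alph P k)"
  by (auto simp: alph_def)

lemma theta_rep: "(i, True) \<in> alph P k \<Longrightarrow> theta P k (replicate t (i, True)) = theta P k [(i, True)] [^]\<^bsub>pc_group P k\<^esub> t"
proof (induction t)
  case 0
  then show ?case by (simp add: one_pc_group)
next
  case (Suc t)
  have "theta P k (replicate (Suc t) (i, True)) = theta P k (replicate t (i, True) @ [(i, True)])"
    by (simp add: replicate_append_same)
  also have "\<dots> = theta P k (replicate t (i, True)) \<otimes>\<^bsub>pc_group P k\<^esub> theta P k [(i, True)]"
    by (rule theta_mult[symmetric]) (use Suc.prems in auto)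
  finally show ?case using Suc by simp
qed

lemma lemma_L:
  assumes emb: "\<And>W1 W2. W1 \<in> lists (alph P (Suc i)) \<Longrightarrow> W2 \<in> lists (alph P (Suc i)) \<Longrightarrow>
                   pc_eq P 2 W1 W2 \<Longrightarrow> pc_eq P (Suc i) W1 W2"
    and i: "2 \<le> i"
    and h1: "pc_eq P i lhs (p @ W')" and h2: "pc_eq P 2 lhs (p @ W)"
    and p: "p \<in> lists (alph P i)" and W: "W \<in> lists (alph P (Suc i))" and W': "W' \<in> lists (alph P (Suc i))"
  shows "pc_eq P i lhs (p @ W)"
proof -
  have "pc_eq P 2 lhs (p @ W')" using pc_eq_mono[OF h1] i by simp
  then have "pc_eq P 2 (p @ W') (p @ W)" using h2 by (blast intro: pc_eq.sym pc_eq.trans)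
  moreover have "p \<in> lists (alph P 2)" by (rule lists_mono[OF _ p]) (use i in simp)
  moreover have "W \<in> lists (alph P 2)" by (rule lists_mono[OF _ W]) (use i in simp)
  moreover have "W' \<in> lists (alph P 2)" by (rule lists_mono[OF _ W']) (use i in simp)
  ultimately have "pc_eq P 2 W' W" using pc_cancel_left by blast
  then have "pc_eq P (Suc i) W' W" using emb W W' by blast
  then have "pc_eq P i W' W" by (rule pc_eq_mono) simp
  then have "pc_eq P i (p @ W') (p @ W)" using p by (rule pc_eq_congL)
  then show ?thesis using h1 by (blast intro: pc_eq.trans)
qed

lemma derive_level:
  assumes valid: "pcp_valid P" and der: "pcp_derived P" and i: "2 \<le> i" "i \<le> pc_n P"
    and emb: "\<And>W1 W2. W1 \<in> lists (alph P (Suc i)) \<Longrightarrow> W2 \<in> lists (alph P (Suc i)) \<Longrightarrow>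
                   pc_eq P 2 W1 W2 \<Longrightarrow> pc_eq P (Suc i) W1 W2"
  shows "(\<forall>j. i < j \<and> j \<le> pc_n P \<longrightarrow>
      (pc_r P j = \<infinity> \<longrightarrow> pc_eq P i [(j, False), (i, True)] ((i, True) # gvec P i (pc_c P i j))) \<and>
      (pc_r P i = \<infinity> \<and> pc_r P j = \<infinity> \<longrightarrow> pc_eq P i [(j, False), (i, False)] ((i, False) # gvec P i (pc_d P i j)))) \<and>
    (\<forall>t. pc_r P i = enat t \<longrightarrow>
      pc_eq P i [(i, False)] (replicate (t - 1) (i, True) @ gvec P i (pc_f P i)))"
proof -
  interpret G: group "pc_group P i" by (rule group_pc)
  let ?th = "theta P i"
  have gi: "gvec P i v \<in> lists (alph P (Suc i))" for v by (rule gvec_lists) simp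
  have gi': "gvec P i v \<in> lists (alph P i)" for v by (rule gvec_lists) simp
  have ai: "[(i, s)] \<in> lists (alph P i)" for s using i by (auto simp: alph_def)
  have pij: "(i, s) \<in> alph P i" for s using i by (auto simp: alph_def)
  have part1: "(pc_r P j = \<infinity> \<longrightarrow> pc_eq P i [(j, False), (i, True)] ((i, True) # gvec P i (pc_c P i j))) \<and>
      (pc_r P i = \<infinity> \<and> pc_r P j = \<infinity> \<longrightarrow> pc_eq P i [(j, False), (i, False)] ((i, False) # gvec P i (pc_d P i j)))"
    if j: "i < j" "j \<le> pc_n P" for j
  proof (intro conjI impI)
    have aj: "[(j, s)] \<in> lists (alph P i)" for s using i j by (auto simp: alph_def)
    let ?x = "?th [(j, True)]" and ?b = "?th [(i, True)]" and ?b' = "?th [(i, False)]"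
    have cx: "?x \<in> carrier (pc_group P i)" using aj by (rule theta_carrier)
    have cb: "?b \<in> carrier (pc_group P i)" using ai by (rule theta_carrier)
    have xinv: "?th [(j, False)] = inv\<^bsub>pc_group P i\<^esub> ?x" using theta_winv[OF aj[of True]] by simp
    have binv: "?th [(i, False)] = inv\<^bsub>pc_group P i\<^esub> ?b" using theta_winv[OF ai[of True]] by simp
    {
      assume rj: "pc_r P j = \<infinity>"
      let ?A = "gvec P i (pc_a P i j)"
      have cc: "?th ?A \<in> carrier (pc_group P i)" using gi' by (rule theta_carrier)
      have "pc_eq P i [(j, True), (i, True)] ((i, True) # ?A)"
        by (rule rel0) (unfold rels_def, use i j in blast)
      then have "?th ([(j, True)] @ [(i, True)]) = ?th ([(i, True)] @ ?A)"
        using pc_eq_lists theta_eq_iff by (metis append_Cons append_Nil)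
      then have e: "?x \<otimes>\<^bsub>pc_group P i\<^esub> ?b = ?b \<otimes>\<^bsub>pc_group P i\<^esub> ?th ?A"
        using aj ai gi' by (simp add: theta_mult del: in_lists_conv_set)
      have "inv\<^bsub>pc_group P i\<^esub> ?x \<otimes>\<^bsub>pc_group P i\<^esub> ?b = ?b \<otimes>\<^bsub>pc_group P i\<^esub> inv\<^bsub>pc_group P i\<^esub> ?th ?A"
        using G.conj_inv[OF cx cb cc e] .
      moreover have "?th ([(j, False)] @ [(i, True)]) = ?th [(j, False)] \<otimes>\<^bsub>pc_group P i\<^esub> ?b"
        by (rule theta_mult[symmetric]) (use aj ai in auto)
      moreover have "?th ([(i, True)] @ winv ?A) = ?b \<otimes>\<^bsub>pc_group P i\<^esub> ?th (winv ?A)"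
        by (rule theta_mult[symmetric]) (use ai gi' in auto)
      moreover have "?th (winv ?A) = inv\<^bsub>pc_group P i\<^esub> ?th ?A" using gi' by (rule theta_winv)
      ultimately have "?th ([(j, False)] @ [(i, True)]) = ?th ([(i, True)] @ winv ?A)"
        using xinv by simp
      moreover have "[(j, False)] @ [(i, True)] \<in> lists (alph P i)" "[(i, True)] @ winv ?A \<in> lists (alph P i)"
        using aj ai gi' by auto
      ultimately have h1: "pc_eq P i [(j, False), (i, True)] ([(i, True)] @ winv ?A)"
        using theta_eq_iff by (metis append_Cons append_Nil)
      have h2: "pc_eq P 2 [(j, False), (i, True)] ([(i, True)] @ gvec P i (pc_c P i j))"
        using der i j rj unfolding pcp_derived_def by simp
      show "pc_eq P i [(j, False), (i, True)] ((i, True) # gvec P i (pc_c P i j))"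
        using lemma_L[OF emb i(1) h1 h2 ai gi] gi by simp
    }
    {
      assume r: "pc_r P i = \<infinity> \<and> pc_r P j = \<infinity>"
      let ?A = "gvec P i (pc_b P i j)"
      have cc: "?th ?A \<in> carrier (pc_group P i)" using gi' by (rule theta_carrier)
      have cb': "?b' \<in> carrier (pc_group P i)" using ai by (rule theta_carrier)
      have "pc_eq P i [(j, True), (i, False)] ((i, False) # ?A)"
        by (rule rel0) (unfold rels_def, use i j r in blast)
      then have "?th ([(j, True)] @ [(i, False)]) = ?th ([(i, False)] @ ?A)"
        using pc_eq_lists theta_eq_iff by (metis append_Cons append_Nil)
      then have e: "?x \<otimes>\<^bsub>pc_group P i\<^esub> ?b' = ?b' \<otimes>\<^bsub>pc_group P i\<^esub> ?th ?A"
        using aj ai gi' by (simp add: theta_mult del: in_lists_conv_set)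
      have "inv\<^bsub>pc_group P i\<^esub> ?x \<otimes>\<^bsub>pc_group P i\<^esub> ?b' = ?b' \<otimes>\<^bsub>pc_group P i\<^esub> inv\<^bsub>pc_group P i\<^esub> ?th ?A"
        using G.conj_inv[OF cx cb' cc e] .
      moreover have "?th ([(j, False)] @ [(i, False)]) = ?th [(j, False)] \<otimes>\<^bsub>pc_group P i\<^esub> ?b'"
        by (rule theta_mult[symmetric]) (use aj ai in auto)
      moreover have "?th ([(i, False)] @ winv ?A) = ?b' \<otimes>\<^bsub>pc_group P i\<^esub> ?th (winv ?A)"
        by (rule theta_mult[symmetric]) (use ai gi' in auto)
      moreover have "?th (winv ?A) = inv\<^bsub>pc_group P i\<^esub> ?th ?A" using gi' by (rule theta_winv)
      ultimately have "?th ([(j, False)] @ [(i, False)]) = ?th ([(i, False)] @ winv ?A)"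
        using xinv by simp
      moreover have "[(j, False)] @ [(i, False)] \<in> lists (alph P i)" "[(i, False)] @ winv ?A \<in> lists (alph P i)"
        using aj ai gi' by auto
      ultimately have h1: "pc_eq P i [(j, False), (i, False)] ([(i, False)] @ winv ?A)"
        using theta_eq_iff by (metis append_Cons append_Nil)
      have h2: "pc_eq P 2 [(j, False), (i, False)] ([(i, False)] @ gvec P i (pc_d P i j))"
        using der i j r unfolding pcp_derived_def by simp
      show "pc_eq P i [(j, False), (i, False)] ((i, False) # gvec P i (pc_d P i j))"
        using lemma_L[OF emb i(1) h1 h2 ai gi] gi by simp
    }
  qed
  have part2: "pc_eq P i [(i, False)] (replicate (t - 1) (i, True) @ gvec P i (pc_f P i))"
    if t: "pc_r P i = enat t" for t
  proof -
    have "pc_r P i \<noteq> enat 0" using valid i unfolding pcp_valid_def zero_enat_def[symmetric] by auto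
    then have t0: "t \<noteq> 0" using t by auto
    let ?b = "?th [(i, True)]" and ?E = "gvec P i (pc_e P i)"
    have cb: "?b \<in> carrier (pc_group P i)" using ai by (rule theta_carrier)
    have cc: "?th ?E \<in> carrier (pc_group P i)" using gi' by (rule theta_carrier)
    have rp: "replicate n (i, True) \<in> lists (alph P i)" for n using pij by auto
    have binv_i: "?th [(i, False)] = inv\<^bsub>pc_group P i\<^esub> ?b" using theta_winv[OF ai[of True]] by simp
    have "pc_eq P i (replicate t (i, True)) ?E"
      by (rule rel0) (unfold rels_def, use i t in blast)
    then have "?th (replicate t (i, True)) = ?th ?E" using pc_eq_lists theta_eq_iff by metis
    then have e: "?b [^]\<^bsub>pc_group P i\<^esub> t = ?th ?E" using theta_rep[OF pij] by simp
    have "inv\<^bsub>pc_group P i\<^esub> ?b = ?b [^]\<^bsub>pc_group P i\<^esub> (t - 1) \<otimes>\<^bsub>pc_group P i\<^esub> inv\<^bsub>pc_group P i\<^esub> ?th ?E"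
      using G.pow_inv[OF cb cc e t0] .
    moreover have "?th (replicate (t - 1) (i, True) @ winv ?E) =
        ?th (replicate (t - 1) (i, True)) \<otimes>\<^bsub>pc_group P i\<^esub> ?th (winv ?E)"
      by (rule theta_mult[symmetric]) (use rp gi' in auto)
    moreover have "?th (winv ?E) = inv\<^bsub>pc_group P i\<^esub> ?th ?E" using gi' by (rule theta_winv)
    ultimately have "?th [(i, False)] = ?th (replicate (t - 1) (i, True) @ winv ?E)"
      using binv_i theta_rep[OF pij] by simp
    moreover have "replicate (t - 1) (i, True) @ winv ?E \<in> lists (alph P i)" using rp gi' by auto
    ultimately have h1: "pc_eq P i [(i, False)] (replicate (t - 1) (i, True) @ winv ?E)"
      using theta_eq_iff ai by metis
    have h2: "pc_eq P 2 [(i, False)] (replicate (t - 1) (i, True) @ gvec P i (pc_f P i))"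
      using der i t unfolding pcp_derived_def by simp
    show ?thesis using lemma_L[OF emb i(1) h1 h2 rp gi] gi by simp
  qed
  show ?thesis using part1 part2 by blast
qed

lemma embed:
  assumes valid: "pcp_valid P" and der: "pcp_derived P" and cons: "consistent_from P 2"
  shows "2 \<le> l \<Longrightarrow> W1 \<in> lists (alph P l) \<Longrightarrow> W2 \<in> lists (alph P l) \<Longrightarrow> pc_eq P 2 W1 W2 \<Longrightarrow> pc_eq P l W1 W2"
proof (induction "Suc (pc_n P) - l" arbitrary: l W1 W2 rule: less_induct)
  case less
  show ?case
  proof (cases "l \<le> pc_n P")
    case False
    then have "alph P l = {}" by (auto simp: alph_def)
    then have "W1 = []" "W2 = []" using less.prems by auto
    then show ?thesis by (auto intro: pc_eq.refl)
  next
    case True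
    have emb: "\<And>W1 W2. W1 \<in> lists (alph P (Suc i)) \<Longrightarrow> W2 \<in> lists (alph P (Suc i)) \<Longrightarrow>
                   pc_eq P 2 W1 W2 \<Longrightarrow> pc_eq P (Suc i) W1 W2" if i: "l \<le> i" "i \<le> pc_n P" for i
    proof -
      fix W1 W2 assume "W1 \<in> lists (alph P (Suc i))" "W2 \<in> lists (alph P (Suc i))" "pc_eq P 2 W1 W2"
      moreover have "Suc (pc_n P) - Suc i < Suc (pc_n P) - l" using i by simp
      moreover have "2 \<le> Suc i" using i less.prems by simp
      ultimately show "pc_eq P (Suc i) W1 W2" using less.hyps by blast
    qed
    have dl: "(\<forall>j. i < j \<and> j \<le> pc_n P \<longrightarrow>
      (pc_r P j = \<infinity> \<longrightarrow> pc_eq P i [(j, False), (i, True)] ((i, True) # gvec P i (pc_c P i j))) \<and>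
      (pc_r P i = \<infinity> \<and> pc_r P j = \<infinity> \<longrightarrow> pc_eq P i [(j, False), (i, False)] ((i, False) # gvec P i (pc_d P i j)))) \<and>
    (\<forall>t. pc_r P i = enat t \<longrightarrow>
      pc_eq P i [(i, False)] (replicate (t - 1) (i, True) @ gvec P i (pc_f P i)))"
      if i: "l \<le> i" "i \<le> pc_n P" for i
      by (rule derive_level[OF valid der _ i(2) emb[OF i]]) (use i less.prems in simp)
    have dr: "DR P l"
      unfolding DR_def
    proof (intro conjI allI impI)
      fix i j assume ij: "l \<le> i \<and> i < j \<and> j \<le> pc_n P"
      {
        assume "pc_r P j = \<infinity>"
        then have "pc_eq P i [(j, False), (i, True)] ((i, True) # gvec P i (pc_c P i j))" using dl[of i] ij by simp
        then show "pc_eq P l [(j, False), (i, True)] ((i, True) # gvec P i (pc_c P i j))"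
          by (rule pc_eq_mono) (use ij in simp)
      }
      {
        assume "pc_r P i = \<infinity> \<and> pc_r P j = \<infinity>"
        then have "pc_eq P i [(j, False), (i, False)] ((i, False) # gvec P i (pc_d P i j))" using dl[of i] ij by simp
        then show "pc_eq P l [(j, False), (i, False)] ((i, False) # gvec P i (pc_d P i j))"
          by (rule pc_eq_mono) (use ij in simp)
      }
    next
      fix i t assume it: "l \<le> i \<and> i \<le> pc_n P \<and> pc_r P i = enat t"
      then have "pc_eq P i [(i, False)] (replicate (t - 1) (i, True) @ gvec P i (pc_f P i))" using dl[of i] by simp
      then show "pc_eq P l [(i, False)] (replicate (t - 1) (i, True) @ gvec P i (pc_f P i))"
        by (rule pc_eq_mono) (use it in simp)
    qed
    have l1: "1 \<le> l" using less.prems by simp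
    have c1: "collect P W1 \<in> lists (alph P l) \<and> pc_eq P l W1 (collect P W1) \<and> reduced_from P l (collect P W1)"
      by (rule collect_level[OF valid l1 less.prems(2) dr])
    have c2: "collect P W2 \<in> lists (alph P l) \<and> pc_eq P l W2 (collect P W2) \<and> reduced_from P l (collect P W2)"
      by (rule collect_level[OF valid l1 less.prems(3) dr])
    have r1: "reduced_from P 2 (collect P W1)" using reduced_lift[OF valid less.prems(1) _] c1 True by simp
    have r2: "reduced_from P 2 (collect P W2)" using reduced_lift[OF valid less.prems(1) _] c2 True by simp
    have "pc_eq P 2 W1 (collect P W1)" using c1 less.prems(1) pc_eq_mono by blast
    moreover have "pc_eq P 2 W2 (collect P W2)" using c2 less.prems(1) pc_eq_mono by blast
    ultimately have "pc_eq P 2 (collect P W1) (collect P W2)" using less.prems(4)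
      by (blast intro: pc_eq.sym pc_eq.trans)
    moreover have "collect P W1 \<in> lists (alph P 2)" "collect P W2 \<in> lists (alph P 2)"
      using c1 c2 less.prems(1) lists_mono by blast+
    ultimately have "collect P W1 = collect P W2" using consistent_unique[OF cons] r1 r2 by blast
    then show ?thesis using c1 c2 by (metis pc_eq.sym pc_eq.trans)
  qed
qed

lemma tau_append[simp]: "tau P (u @ v) = tau P u @ tau P v"
  by (simp add: tau_def)

lemma tau_nil[simp]: "tau P [] = []"
  by (simp add: tau_def)

lemma tau_single: "tau P [(j, s)] = (if s then gvec P 1 (pc_a P 1 j) else gvec P 1 (pc_c P 1 j))"
  by (simp add: tau_def)

lemma tau_lists: "tau P w \<in> lists (alph P 2)"
proof (induction w)
  case Nil
  then show ?case by simp
next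
  case (Cons a w)
  have g: "gvec P 1 v \<in> lists (alph P 2)" for v by (rule gvec_lists) simp
  have "tau P [a] \<in> lists (alph P 2)" using g by (cases a) (simp add: tau_single del: in_lists_conv_set)
  moreover have "tau P (a # w) = tau P [a] @ tau P w" using tau_append[of P "[a]" w] by simp
  ultimately show ?case using Cons by simp
qed

definition TT :: "pcp \<Rightarrow> word \<Rightarrow> word set" where
  "TT P w = theta P 2 (tau P w)"

lemma TT_mult: "TT P (u @ v) = TT P u \<otimes>\<^bsub>pc_group P 2\<^esub> TT P v"
  unfolding TT_def by (simp add: theta_mult[OF tau_lists tau_lists] del: in_lists_conv_set)

lemma TT_carrier: "TT P w \<in> carrier (pc_group P 2)"
  unfolding TT_def by (rule theta_carrier[OF tau_lists])

lemma TT_nil: "TT P [] = \<one>\<^bsub>pc_group P 2\<^esub>"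
  unfolding TT_def by (simp add: one_pc_group)

lemma TT_inv:
  assumes der: "pcp_derived P" and l: "2 \<le> l" "l \<le> pc_n P"
  shows "TT P [(l, False)] = inv\<^bsub>pc_group P 2\<^esub> TT P [(l, True)]"
proof -
  interpret G: group "pc_group P 2" by (rule group_pc)
  have "pc_eq P 2 (gvec P 1 (pc_a P 1 l) @ gvec P 1 (pc_c P 1 l)) []"
    using der l unfolding pcp_derived_def by simp
  then have "theta P 2 (tau P ([(l, True)] @ [(l, False)])) = theta P 2 []"
    using theta_eq_iff pc_eq_lists by (metis tau_single tau_append)
  then have "TT P [(l, True)] \<otimes>\<^bsub>pc_group P 2\<^esub> TT P [(l, False)] = \<one>\<^bsub>pc_group P 2\<^esub>"
    using TT_mult[of P "[(l, True)]" "[(l, False)]"] unfolding TT_def by (simp add: one_pc_group)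
  then have "TT P [(l, False)] \<otimes>\<^bsub>pc_group P 2\<^esub> TT P [(l, True)] = \<one>\<^bsub>pc_group P 2\<^esub>"
    using G.inv_comm TT_carrier by blast
  then show ?thesis using G.inv_equality TT_carrier by blast
qed

lemma theta_inv1:
  assumes l: "k \<le> l" "l \<le> pc_n P"
  shows "theta P k [(l, False)] = inv\<^bsub>pc_group P k\<^esub> theta P k [(l, True)]"
  using theta_winv[of "[(l, True)]" P k] l by (simp add: alph_def)

definition phi :: "pcp \<Rightarrow> nat \<Rightarrow> word \<Rightarrow> word" where
  "phi P m W = concat (map (\<lambda>(l, s). if s then gvec P m (pc_a P m l) else winv (gvec P m (pc_a P m l))) W)"

lemma phi_lists: "phi P m W \<in> lists (alph P (Suc m))"
proof (induction W)
  case Nil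
  then show ?case by (simp add: phi_def)
next
  case (Cons a W)
  have g: "gvec P m v \<in> lists (alph P (Suc m))" for v by (rule gvec_lists) simp
  have "winv (gvec P m v) \<in> lists (alph P (Suc m))" for v using g winv_lists by blast
  then show ?case using Cons g by (auto simp: phi_def split: prod.splits)
qed

lemma claim1:
  fixes F :: "word \<Rightarrow> 'a" and G (structure)
  assumes grp: "group G"
    and Fm: "\<And>u v. u \<in> lists (alph P 2) \<Longrightarrow> v \<in> lists (alph P 2) \<Longrightarrow> F (u @ v) = F u \<otimes> F v"
    and Fc: "\<And>u. u \<in> lists (alph P 2) \<Longrightarrow> F u \<in> carrier G"
    and F0: "F [] = \<one>"
    and Finv: "\<And>l. m < l \<Longrightarrow> l \<le> pc_n P \<Longrightarrow> F [(l, False)] = inv F [(l, True)]"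
    and Fcomm: "\<And>l. m < l \<Longrightarrow> l \<le> pc_n P \<Longrightarrow> F [(l, True)] \<otimes> \<alpha> = \<alpha> \<otimes> F (gvec P m (pc_a P m l))"
    and \<alpha>: "\<alpha> \<in> carrier G" and m: "1 \<le> m"
  shows "W \<in> lists (alph P (Suc m)) \<Longrightarrow> F W \<otimes> \<alpha> = \<alpha> \<otimes> F (phi P m W)"
proof -
  interpret group G by (rule grp)
  have L2: "w \<in> lists (alph P (Suc m)) \<Longrightarrow> w \<in> lists (alph P 2)" for w
    by (rule lists_mono[of 2 "Suc m"]) (use m in auto)
  have Fwinv: "X \<in> lists (alph P (Suc m)) \<Longrightarrow> F (winv X) = inv (F X)" for X
  proof (induction X)
    case Nil
    then show ?case using F0 by simp
  next
    case (Cons a X)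
    obtain l s where a: "a = (l, s)" by (cases a)
    have l: "m < l" "l \<le> pc_n P" using Cons.prems a by (auto simp: alph_def)
    have la: "[(l, b)] \<in> lists (alph P 2)" for b using l m by (auto simp: alph_def)
    have X2: "X \<in> lists (alph P 2)" "winv X \<in> lists (alph P 2)" using Cons.prems L2 winv_lists by auto
    have FX: "F X \<in> carrier G" using X2 Fc by blast
    have Fa: "F [(l, b)] \<in> carrier G" for b using la Fc by blast
    have ia: "F [(l, \<not> s)] = inv F [(l, s)]"
    proof (cases s)
      case True
      then show ?thesis using Finv[OF l] by simp
    next
      case False
      then show ?thesis using Finv[OF l] Fa by simp
    qed
    have "F (winv (a # X)) = F (winv X @ [(l, \<not> s)])" using a by simp
    also have "\<dots> = F (winv X) \<otimes> F [(l, \<not> s)]" using Fm X2 la by blast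
    also have "\<dots> = inv (F X) \<otimes> inv F [(l, s)]" using Cons.IH Cons.prems ia by simp
    also have "\<dots> = inv (F [(l, s)] \<otimes> F X)" using FX Fa by (simp add: inv_mult_group)
    also have "F [(l, s)] \<otimes> F X = F (a # X)" using Fm[of "[(l, s)]" X] la X2 a by simp
    finally show ?case .
  qed
  show "W \<in> lists (alph P (Suc m)) \<Longrightarrow> F W \<otimes> \<alpha> = \<alpha> \<otimes> F (phi P m W)"
  proof (induction W)
    case Nil
    then show ?case using F0 \<alpha> by (simp add: phi_def)
  next
    case (Cons a W)
    obtain l s where a: "a = (l, s)" by (cases a)
    have l: "m < l" "l \<le> pc_n P" using Cons.prems a by (auto simp: alph_def)
    have la: "[(l, b)] \<in> lists (alph P 2)" for b using l m by (auto simp: alph_def)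
    have W2: "W \<in> lists (alph P 2)" using Cons.prems L2 by auto
    define g where "g = gvec P m (pc_a P m l)"
    have g: "g \<in> lists (alph P (Suc m))" unfolding g_def by (rule gvec_lists) simp
    have g2: "g \<in> lists (alph P 2)" "winv g \<in> lists (alph P 2)" using g L2 winv_lists by auto
    have pW: "phi P m W \<in> lists (alph P 2)" using phi_lists L2 by blast
    have phia: "phi P m (a # W) = (if s then g else winv g) @ phi P m W" by (simp add: phi_def a g_def)
    have Fa: "F [(l, b)] \<in> carrier G" for b using la Fc by blast
    have Fg: "F g \<in> carrier G" using g2 Fc by blast
    have FW: "F W \<in> carrier G" using W2 Fc by blast
    have FpW: "F (phi P m W) \<in> carrier G" using pW Fc by blast
    have letter: "F [(l, s)] \<otimes> \<alpha> = \<alpha> \<otimes> F (if s then g else winv g)"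
    proof (cases s)
      case True
      then show ?thesis using Fcomm[OF l] by (simp add: g_def)
    next
      case False
      have "inv F [(l, True)] \<otimes> \<alpha> = \<alpha> \<otimes> inv F g"
        by (rule conj_inv) (use Fa \<alpha> Fg Fcomm[OF l] in \<open>auto simp: g_def\<close>)
      then show ?thesis using False Finv[OF l] Fwinv[OF g] by simp
    qed
    have "F (a # W) \<otimes> \<alpha> = F [(l, s)] \<otimes> F W \<otimes> \<alpha>" using Fm[of "[(l, s)]" W] la W2 a by simp
    also have "\<dots> = F [(l, s)] \<otimes> (F W \<otimes> \<alpha>)" using Fa FW \<alpha> by (simp add: m_assoc)
    also have "\<dots> = F [(l, s)] \<otimes> (\<alpha> \<otimes> F (phi P m W))" using Cons.IH Cons.prems by simp
    also have "\<dots> = (F [(l, s)] \<otimes> \<alpha>) \<otimes> F (phi P m W)" using Fa FpW \<alpha> by (simp add: m_assoc)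
    also have "\<dots> = \<alpha> \<otimes> F (if s then g else winv g) \<otimes> F (phi P m W)" using letter by simp
    also have "\<dots> = \<alpha> \<otimes> (F (if s then g else winv g) \<otimes> F (phi P m W))"
      using \<alpha> FpW Fc g2 by (simp add: m_assoc)
    also have "F (if s then g else winv g) \<otimes> F (phi P m W) = F (phi P m (a # W))"
      using Fm pW g2 phia by (metis (full_types))
    finally show ?case .
  qed
qed

lemma (in group) grpA:
  assumes c: "\<gamma> \<in> carrier G" "\<alpha> \<in> carrier G" "\<beta> \<in> carrier G" "\<delta> \<in> carrier G"
    and h1: "\<gamma> \<otimes> inv \<alpha> = inv \<alpha> \<otimes> \<beta>" and h2: "\<beta> \<otimes> \<alpha> = \<alpha> \<otimes> \<delta>"
  shows "\<gamma> = \<delta>"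
proof -
  have "\<gamma> = inv \<alpha> \<otimes> \<beta> \<otimes> \<alpha>" using inv_solve_right[of "inv \<alpha> \<otimes> \<beta>" \<gamma> \<alpha>] c h1 by simp
  also have "\<dots> = inv \<alpha> \<otimes> (\<alpha> \<otimes> \<delta>)" using c h2 by (simp add: m_assoc)
  also have "\<dots> = \<delta>" using c by (simp add: m_assoc[symmetric])
  finally show ?thesis .
qed

lemma (in group) grpB:
  assumes c: "\<gamma> \<in> carrier G" "\<alpha> \<in> carrier G" "\<beta> \<in> carrier G"
    and h: "\<beta> \<otimes> \<alpha> = \<alpha> \<otimes> \<gamma>"
  shows "\<gamma> \<otimes> inv \<alpha> = inv \<alpha> \<otimes> \<beta>"
proof -
  have "\<gamma> = inv \<alpha> \<otimes> (\<beta> \<otimes> \<alpha>)" using inv_solve_left[of \<gamma> \<alpha> "\<beta> \<otimes> \<alpha>"] c h by simp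
  then have "\<gamma> = inv \<alpha> \<otimes> \<beta> \<otimes> \<alpha>" using c by (simp add: m_assoc)
  then show ?thesis using inv_solve_right[of "inv \<alpha> \<otimes> \<beta>" \<gamma> \<alpha>] c by simp
qed

lemma rels_split:
  assumes "(u, v) \<in> rels P m"
  shows "(u, v) \<in> rels P (Suc m) \<or>
    (\<exists>t. pc_r P m = enat t \<and> m \<le> pc_n P \<and> u = replicate t (m, True) \<and> v = gvec P m (pc_e P m)) \<or>
    (\<exists>j. m < j \<and> j \<le> pc_n P \<and> u = [(j, True), (m, True)] \<and> v = (m, True) # gvec P m (pc_a P m j)) \<or>
    (\<exists>j. m < j \<and> j \<le> pc_n P \<and> pc_r P m = \<infinity> \<and> u = [(j, True), (m, False)] \<and> v = (m, False) # gvec P m (pc_b P m j))"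
  using assms[unfolded rels_def]
proof (elim UnE)
  assume "(u, v) \<in> {(replicate t (i, True), gvec P i (pc_e P i)) | i t. m \<le> i \<and> i \<le> pc_n P \<and> pc_r P i = enat t}"
  then obtain i t where h: "u = replicate t (i, True)" "v = gvec P i (pc_e P i)" "m \<le> i" "i \<le> pc_n P" "pc_r P i = enat t"
    by blast
  show ?thesis
  proof (cases "i = m")
    case True
    then show ?thesis using h by blast
  next
    case False
    then have "Suc m \<le> i" using h by simp
    then show ?thesis using h unfolding rels_def by blast
  qed
next
  assume "(u, v) \<in> {([(j, True), (i, True)], (i, True) # gvec P i (pc_a P i j)) | i j. m \<le> i \<and> i < j \<and> j \<le> pc_n P}"
  then obtain i j where h: "u = [(j, True), (i, True)]" "v = (i, True) # gvec P i (pc_a P i j)" "m \<le> i" "i < j" "j \<le> pc_n P"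
    by blast
  show ?thesis
  proof (cases "i = m")
    case True
    then show ?thesis using h by blast
  next
    case False
    then have "Suc m \<le> i" using h by simp
    then show ?thesis using h unfolding rels_def by blast
  qed
next
  assume "(u, v) \<in> {([(j, True), (i, False)], (i, False) # gvec P i (pc_b P i j)) | i j.
          m \<le> i \<and> i < j \<and> j \<le> pc_n P \<and> pc_r P i = \<infinity>}"
  then obtain i j where h: "u = [(j, True), (i, False)]" "v = (i, False) # gvec P i (pc_b P i j)" "m \<le> i" "i < j"
    "j \<le> pc_n P" "pc_r P i = \<infinity>"
    by blast
  show ?thesis
  proof (cases "i = m")
    case True
    then show ?thesis using h by blast
  next
    case False
    then have "Suc m \<le> i" using h by simp
    then show ?thesis using h unfolding rels_def by blast
  qed
qed

lemma pc_eq_TT: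
  assumes der: "pcp_derived P" and m: "2 \<le> m" and RR: "\<forall>(u, v)\<in>rels P m. TT P u = TT P v"
  shows "pc_eq P m u v \<Longrightarrow> TT P u = TT P v"
proof (induction rule: pc_eq.induct)
  case (refl w)
  then show ?case by simp
next
  case (sym u v)
  then show ?case by simp
next
  case (trans u v w)
  then show ?case by simp
next
  case (rel u v x y)
  then show ?case using RR by (auto simp: TT_mult)
next
  case (cancel i s x y)
  interpret G: group "pc_group P 2" by (rule group_pc)
  have i: "2 \<le> i" "i \<le> pc_n P" using cancel m by (auto simp: alph_def)
  have "TT P [(i, s), (i, \<not> s)] = TT P [(i, s)] \<otimes>\<^bsub>pc_group P 2\<^esub> TT P [(i, \<not> s)]"
    using TT_mult[of P "[(i, s)]" "[(i, \<not> s)]"] by simp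
  also have "\<dots> = \<one>\<^bsub>pc_group P 2\<^esub>"
    using TT_inv[OF der i] TT_carrier[of P] by (cases s) auto
  finally have e: "TT P [(i, s), (i, \<not> s)] = \<one>\<^bsub>pc_group P 2\<^esub>" .
  have "TT P (x @ [(i, s), (i, \<not> s)] @ y) = TT P x \<otimes>\<^bsub>pc_group P 2\<^esub> (TT P [(i, s), (i, \<not> s)] \<otimes>\<^bsub>pc_group P 2\<^esub> TT P y)"
    by (simp only: TT_mult)
  also have "\<dots> = TT P x \<otimes>\<^bsub>pc_group P 2\<^esub> TT P y" using e by (simp add: TT_carrier)
  also have "\<dots> = TT P (x @ y)" by (simp only: TT_mult)
  finally show ?case .
qed

lemma respect_all:
  assumes valid: "pcp_valid P" and der: "pcp_derived P" and cons: "consistent_from P 2"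
    and E1: "\<And>j k. 1 < j \<Longrightarrow> j < k \<Longrightarrow> k \<le> pc_n P \<Longrightarrow>
               TT P ((j, True) # gvec P j (pc_a P j k)) = TT P [(k, True), (j, True)]"
    and E2: "\<And>j t. 1 < j \<Longrightarrow> j \<le> pc_n P \<Longrightarrow> pc_r P j = enat t \<Longrightarrow>
               TT P (replicate t (j, True)) = TT P (gvec P j (pc_e P j))"
  shows "2 \<le> m \<Longrightarrow> \<forall>(u, v)\<in>rels P m. TT P u = TT P v"
proof (induction "Suc (pc_n P) - m" arbitrary: m rule: less_induct)
  case less
  show ?case
  proof (cases "m \<le> pc_n P")
    case False
    then have "rels P m = {}" unfolding rels_def by auto
    then show ?thesis by simp
  next
    case True
    have RS: "\<forall>(u, v)\<in>rels P (Suc m). TT P u = TT P v"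
      using less.hyps[of "Suc m"] True less.prems by simp
    interpret G: group "pc_group P 2" by (rule group_pc)
    show ?thesis
    proof (intro ballI, clarify)
      fix u v assume uv: "(u, v) \<in> rels P m"
      from rels_split[OF uv] show "TT P u = TT P v"
      proof (elim disjE exE conjE)
        assume "(u, v) \<in> rels P (Suc m)"
        then show ?thesis using RS by blast
      next
        fix t assume "pc_r P m = enat t" "m \<le> pc_n P" "u = replicate t (m, True)" "v = gvec P m (pc_e P m)"
        then show ?thesis using E2[of m t] less.prems by simp
      next
        fix j assume "m < j" "j \<le> pc_n P" "u = [(j, True), (m, True)]" "v = (m, True) # gvec P m (pc_a P m j)"
        then show ?thesis using E1[of m j] less.prems by simp
      next
        fix k assume k: "m < k" "k \<le> pc_n P" "pc_r P m = \<infinity>" and u: "u = [(k, True), (m, False)]"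
          and v: "v = (m, False) # gvec P m (pc_b P m k)"
        have m2: "2 \<le> m" using less.prems .
        define gb where "gb = gvec P m (pc_b P m k)"
        have gbl: "gb \<in> lists (alph P (Suc m))" unfolding gb_def by (rule gvec_lists) simp
        have L2: "w \<in> lists (alph P (Suc m)) \<Longrightarrow> w \<in> lists (alph P 2)" for w
          by (rule lists_mono[of 2 "Suc m"]) (use m2 in auto)
        have am: "[(m, s)] \<in> lists (alph P 2)" for s using m2 True by (auto simp: alph_def)
        have ak: "[(k, s)] \<in> lists (alph P (Suc m))" for s using k by (auto simp: alph_def)
        have ak2: "[(k, s)] \<in> lists (alph P 2)" for s using k m2 by (auto simp: alph_def)
        let ?th = "theta P 2"
        let ?\<alpha> = "?th [(m, True)]"
        have c\<alpha>: "?\<alpha> \<in> carrier (pc_group P 2)" using am by (rule theta_carrier)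
        have "pc_eq P 2 [(k, True), (m, False)] ((m, False) # gb)"
          by (rule rel0) (unfold rels_def gb_def, use k m2 in blast)
        then have "?th ([(k, True)] @ [(m, False)]) = ?th ([(m, False)] @ gb)"
          using pc_eq_lists theta_eq_iff by (metis append_Cons append_Nil)
        moreover have "?th ([(k, True)] @ [(m, False)]) = ?th [(k, True)] \<otimes>\<^bsub>pc_group P 2\<^esub> ?th [(m, False)]"
          by (rule theta_mult[symmetric]) (use ak2 am in auto)
        moreover have "?th ([(m, False)] @ gb) = ?th [(m, False)] \<otimes>\<^bsub>pc_group P 2\<^esub> ?th gb"
          by (rule theta_mult[symmetric]) (use gbl L2 am in auto)
        moreover have "?th [(m, False)] = inv\<^bsub>pc_group P 2\<^esub> ?\<alpha>" by (rule theta_inv1) (use m2 True in auto)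
        ultimately have bth: "?th [(k, True)] \<otimes>\<^bsub>pc_group P 2\<^esub> inv\<^bsub>pc_group P 2\<^esub> ?\<alpha> =
            inv\<^bsub>pc_group P 2\<^esub> ?\<alpha> \<otimes>\<^bsub>pc_group P 2\<^esub> ?th gb" by simp
        have cl_th: "?th gb \<otimes>\<^bsub>pc_group P 2\<^esub> ?\<alpha> = ?\<alpha> \<otimes>\<^bsub>pc_group P 2\<^esub> ?th (phi P m gb)"
        proof (rule claim1[OF group_pc _ _ _ _ _ c\<alpha> _ gbl])
          show "\<And>u v. u \<in> lists (alph P 2) \<Longrightarrow> v \<in> lists (alph P 2) \<Longrightarrow>
                 ?th (u @ v) = ?th u \<otimes>\<^bsub>pc_group P 2\<^esub> ?th v" by (simp add: theta_mult)
          show "\<And>u. u \<in> lists (alph P 2) \<Longrightarrow> ?th u \<in> carrier (pc_group P 2)" by (rule theta_carrier)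
          show "?th [] = \<one>\<^bsub>pc_group P 2\<^esub>" by (simp add: one_pc_group)
          show "\<And>l. m < l \<Longrightarrow> l \<le> pc_n P \<Longrightarrow> ?th [(l, False)] = inv\<^bsub>pc_group P 2\<^esub> ?th [(l, True)]"
            by (rule theta_inv1) (use m2 in auto)
          show "1 \<le> m" using m2 by simp
          fix l assume l: "m < l" "l \<le> pc_n P"
          have al: "[(l, True)] \<in> lists (alph P 2)" using l m2 by (auto simp: alph_def)
          have ga: "gvec P m (pc_a P m l) \<in> lists (alph P 2)" using L2 gvec_lists[of "Suc m" m P] by simp
          have "pc_eq P 2 [(l, True), (m, True)] ((m, True) # gvec P m (pc_a P m l))"
            by (rule rel0) (unfold rels_def, use l m2 in blast)
          then have "?th ([(l, True)] @ [(m, True)]) = ?th ([(m, True)] @ gvec P m (pc_a P m l))"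
            using pc_eq_lists theta_eq_iff by (metis append_Cons append_Nil)
          then show "?th [(l, True)] \<otimes>\<^bsub>pc_group P 2\<^esub> ?\<alpha> = ?\<alpha> \<otimes>\<^bsub>pc_group P 2\<^esub> ?th (gvec P m (pc_a P m l))"
            using al am ga by (simp add: theta_mult del: in_lists_conv_set)
        qed
        have phl: "phi P m gb \<in> lists (alph P (Suc m))" by (rule phi_lists)
        have phl2: "phi P m gb \<in> lists (alph P 2)" using phl L2 by blast
        have gbl2: "gb \<in> lists (alph P 2)" using gbl L2 by blast
        have "?th [(k, True)] = ?th (phi P m gb)"
          by (rule G.grpA[OF theta_carrier[OF ak2] c\<alpha> theta_carrier[OF gbl2] theta_carrier[OF phl2] bth cl_th])
        then have "pc_eq P 2 [(k, True)] (phi P m gb)" using theta_eq_iff[OF ak2 phl2] by simp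
        then have pe: "pc_eq P (Suc m) [(k, True)] (phi P m gb)"
          using embed[OF valid der cons _ ak phl] m2 by simp
        have m2': "2 \<le> Suc m" using m2 by simp
        have Tk: "TT P [(k, True)] = TT P (phi P m gb)"
          by (rule pc_eq_TT[OF der m2' RS pe])
        let ?a = "TT P [(m, True)]"
        have ca: "?a \<in> carrier (pc_group P 2)" by (rule TT_carrier)
        have cl_T: "TT P gb \<otimes>\<^bsub>pc_group P 2\<^esub> ?a = ?a \<otimes>\<^bsub>pc_group P 2\<^esub> TT P (phi P m gb)"
        proof (rule claim1[OF group_pc _ _ _ _ _ ca _ gbl])
          show "\<And>u v. u \<in> lists (alph P 2) \<Longrightarrow> v \<in> lists (alph P 2) \<Longrightarrow>
                 TT P (u @ v) = TT P u \<otimes>\<^bsub>pc_group P 2\<^esub> TT P v" by (rule TT_mult)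
          show "\<And>u. u \<in> lists (alph P 2) \<Longrightarrow> TT P u \<in> carrier (pc_group P 2)" by (rule TT_carrier)
          show "TT P [] = \<one>\<^bsub>pc_group P 2\<^esub>" by (rule TT_nil)
          show "\<And>l. m < l \<Longrightarrow> l \<le> pc_n P \<Longrightarrow> TT P [(l, False)] = inv\<^bsub>pc_group P 2\<^esub> TT P [(l, True)]"
            by (rule TT_inv[OF der]) (use m2 in auto)
          show "1 \<le> m" using m2 by simp
          fix l assume l: "m < l" "l \<le> pc_n P"
          have "TT P ([(m, True)] @ gvec P m (pc_a P m l)) = TT P ([(l, True)] @ [(m, True)])"
            using E1[of m l] l m2 by simp
          then show "TT P [(l, True)] \<otimes>\<^bsub>pc_group P 2\<^esub> ?a = ?a \<otimes>\<^bsub>pc_group P 2\<^esub> TT P (gvec P m (pc_a P m l))"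
            by (simp only: TT_mult)
        qed
        have "TT P [(k, True)] \<otimes>\<^bsub>pc_group P 2\<^esub> inv\<^bsub>pc_group P 2\<^esub> ?a = inv\<^bsub>pc_group P 2\<^esub> ?a \<otimes>\<^bsub>pc_group P 2\<^esub> TT P gb"
          by (rule G.grpB[OF TT_carrier ca TT_carrier]) (simp only: cl_T Tk)
        moreover have "TT P [(m, False)] = inv\<^bsub>pc_group P 2\<^esub> ?a" by (rule TT_inv[OF der m2 True])
        ultimately have "TT P ([(k, True)] @ [(m, False)]) = TT P ([(m, False)] @ gb)"
          by (simp only: TT_mult)
        then show ?thesis using u v gb_def by simp
      qed
    qed
  qed
qed

lemma pos_one:
  assumes u: "u' \<in> lists (alph P 2)" and x: "fst x \<ge> 2" and R: "R \<in> lists (alph P 2)"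
    and k: "k < length (u' @ x # (1, True) # R)" and f: "fst ((u' @ x # (1, True) # R) ! k) = 1"
  shows "k = Suc (length u')"
proof (rule ccontr)
  assume ne: "k \<noteq> Suc (length u')"
  consider (a) "k < length u'" | (b) "k = length u'" | (c) "k > Suc (length u')" using ne by linarith
  then show False
  proof cases
    case a
    then have "(u' @ x # (1, True) # R) ! k = u' ! k" by (simp add: nth_append)
    moreover have "u' ! k \<in> set u'" using a by simp
    ultimately show False using u f by (auto simp: alph_def)
  next
    case b
    then show False using f x by simp
  next
    case c
    define k' where "k' = k - Suc (Suc (length u'))"
    have kk: "k = length u' + Suc (Suc k')" using c unfolding k'_def by simp
    have "(u' @ x # (1, True) # R) ! k = R ! k'" unfolding kk by (simp add: nth_append)
    moreover have "k' < length R" using k kk by simp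
    then have "R ! k' \<in> set R" by simp
    ultimately show False using R f by (auto simp: alph_def)
  qed
qed

lemma move_step:
  assumes valid: "pcp_valid P" and u: "u' \<in> lists (alph P 2)" and R: "R \<in> lists (alph P 2)"
    and x: "x = (j, s)" "2 \<le> j" "j \<le> pc_n P" and neg: "\<not> s \<Longrightarrow> pc_r P j = \<infinity>"
  shows "collect_step P (u' @ x # (1, True) # R) = Some (u' @ (1, True) # tau P [x] @ R)"
proof -
  define w where "w = u' @ x # (1, True) # R"
  define p where "p = length u'"
  define q :: nat where "q = (if s then 2 else 4)"
  define rhs where "rhs = (1, True) # tau P [x]"
  have wp: "w ! p = (j, s)" "w ! Suc p = (1, True)" "Suc p < length w"
    unfolding w_def p_def x by (auto simp: nth_append)
  have pos: "k < length w \<Longrightarrow> fst (w ! k) = 1 \<Longrightarrow> k = Suc p" for k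
  proof -
    assume "k < length w" "fst (w ! k) = 1"
    then show "k = Suc p" using pos_one[OF u _ R, of x k] x unfolding w_def p_def by simp
  qed
  have c: "(1, p, q, 2, rhs) \<in> cands P w"
  proof (cases s)
    case True
    then show ?thesis unfolding cands_nth q_def rhs_def using wp x by (simp add: tau_single)
  next
    case False
    then show ?thesis unfolding cands_nth q_def rhs_def using wp x neg by (simp add: tau_single)
  qed
  have mn: "(1, p, q) \<le> (m', p', q')" if c': "(m', p', q', l', r') \<in> cands P w" for m' p' q' l' r'
  proof -
    have m1: "1 \<le> m'" using c' unfolding cands_nth by auto
    show ?thesis
    proof (cases "m' = 1")
      case False
      then show ?thesis using m1 by simp
    next
      case True
      note cc = c'[unfolded cands_nth True]
      have "p < p' \<or> (p = p' \<and> q \<le> q')"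
      proof -
        consider (k1) "q' = 1" | (k2) "q' = 2" | (k3) "q' = 3" | (k4) "q' = 4" | (k5) "q' = 5" | (k6) "q' = 6" | (k7) "q' = 7"
          using cc by blast
        then show ?thesis
        proof cases
          case k1
          then have h: "pc_r P 1 = enat l'" "p' + l' \<le> length w" "\<forall>k<l'. w ! (p' + k) = (1, True)" "1 \<le> pc_n P"
            using cc by auto
          have "pc_r P 1 \<noteq> enat 0" using valid h unfolding pcp_valid_def zero_enat_def[symmetric] by auto
          then have "l' \<noteq> 0" using h by auto
          then have "w ! p' = (1, True)" "p' < length w" using h by (metis add.right_neutral not_gr_zero, linarith)
          then have "p' = Suc p" using pos[of p'] by simp
          then show ?thesis by simp
        next
          case k2
          then have h: "Suc p' < length w" "w ! Suc p' = (1, True)" "snd (w ! p')" using cc by auto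
          then have "p' = p" using pos[of "Suc p'"] by simp
          then have "s" using h wp by simp
          then show ?thesis using \<open>p' = p\<close> k2 by (simp add: q_def)
        next
          case k3
          then have h: "Suc p' < length w" "w ! Suc p' = (1, False)" using cc by auto
          then have "p' = p" using pos[of "Suc p'"] by simp
          then show ?thesis using h wp by simp
        next
          case k4
          then have h: "Suc p' < length w" "w ! Suc p' = (1, True)" "\<not> snd (w ! p')" using cc by auto
          then have "p' = p" using pos[of "Suc p'"] by simp
          then have "\<not> s" using h wp by simp
          then show ?thesis using \<open>p' = p\<close> k4 by (simp add: q_def)
        next
          case k5
          then have h: "Suc p' < length w" "w ! Suc p' = (1, False)" using cc by auto
          then have "p' = p" using pos[of "Suc p'"] by simp
          then show ?thesis using h wp by simp
        next
          case k6
          then have h: "p' < length w" "w ! p' = (1, False)" using cc by auto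
          then have "p' = Suc p" using pos[of p'] by simp
          then show ?thesis using h wp by simp
        next
          case k7
          then have h: "Suc p' < length w" "fst (w ! p') = 1" "fst (w ! Suc p') = 1" using cc by auto
          then have "p' = Suc p" "Suc p' = Suc p" using pos[of p'] pos[of "Suc p'"] by auto
          then show ?thesis by simp
        qed
      qed
      then show ?thesis using True by auto
    qed
  qed
  have "collect_step P w = Some (take p w @ rhs @ drop (p + 2) w)"
    by (rule step_exact[OF c mn])
  moreover have "take p w @ rhs @ drop (p + 2) w = u' @ (1, True) # tau P [x] @ R"
    unfolding w_def p_def rhs_def by simp
  ultimately show ?thesis unfolding w_def by simp
qed

lemma move_all:
  assumes valid: "pcp_valid P"
  shows "u \<in> lists (alph P 2) \<Longrightarrow> (\<forall>(l, s)\<in>set u. \<not> s \<longrightarrow> pc_r P l = \<infinity>) \<Longrightarrow> R \<in> lists (alph P 2) \<Longrightarrow>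
    collect P (u @ (1, True) # R) = collect P ((1, True) # tau P u @ R)"
proof (induction u arbitrary: R rule: rev_induct)
  case Nil
  then show ?case by simp
next
  case (snoc x u')
  obtain j s where x: "x = (j, s)" by (cases x)
  have u': "u' \<in> lists (alph P 2)" using snoc.prems by simp
  have j: "2 \<le> j" "j \<le> pc_n P" using snoc.prems x by (auto simp: alph_def)
  have neg: "\<not> s \<Longrightarrow> pc_r P j = \<infinity>" using snoc.prems x by auto
  have "collect P ((u' @ [x]) @ (1, True) # R) = collect P (u' @ x # (1, True) # R)" by simp
  also have "\<dots> = collect P (u' @ (1, True) # (tau P [x] @ R))"
    using collect_stepI[OF valid move_step[OF valid u' snoc.prems(3) x j neg]] by simp
  also have "\<dots> = collect P ((1, True) # tau P u' @ tau P [x] @ R)"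
    using snoc.IH[OF u' _ ] snoc.prems tau_lists[of P "[x]"] by simp
  also have "\<dots> = collect P ((1, True) # tau P (u' @ [x]) @ R)" by simp
  finally show ?case .
qed

lemma prefix_r1:
  assumes valid: "pcp_valid P" and r1: "pc_r P 1 = enat 1" and n: "1 \<le> pc_n P"
  shows "collect P ((1, True) # X) = collect P (gvec P 1 (pc_e P 1) @ X)"
proof -
  have c: "(1, 0, 1, 1, gvec P 1 (pc_e P 1)) \<in> cands P ((1, True) # X)"
    unfolding cands_nth using r1 n by simp
  have mn: "(1, 0, 1) \<le> (m', p', q')" if c': "(m', p', q', l', r') \<in> cands P ((1, True) # X)" for m' p' q' l' r'
  proof -
    have "1 \<le> m'" "1 \<le> q'" using c' unfolding cands_nth by auto
    then show ?thesis by auto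
  qed
  have "collect_step P ((1, True) # X) = Some (gvec P 1 (pc_e P 1) @ X)"
    using step_exact[OF c mn] by simp
  then show ?thesis by (rule collect_stepI[OF valid])
qed

lemma unshift:
  assumes valid: "pcp_valid P" and r1: "pc_r P 1 \<noteq> enat 1" and Y: "Y \<in> lists (alph P 2)"
    and c: "(m, p, q, l, rhs) \<in> cands P ((1, True) # Y)"
  shows "\<exists>p'. p = Suc p' \<and> (m, p', q, l, rhs) \<in> cands P Y"
proof (cases p)
  case 0
  have Y0: "0 < length Y \<Longrightarrow> 2 \<le> fst (Y ! 0)" using nth_in_alph[OF Y, of 0] by simp
  note cc = c[unfolded cands_nth 0]
  have False
  proof -
    consider (k1) "q = 1" | (k2) "q = 2 \<or> q = 3 \<or> q = 4 \<or> q = 5" | (k6) "q = 6" | (k7) "q = 7"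
      using cc by blast
    then show False
    proof cases
      case k1
      then have h: "1 \<le> m" "m \<le> pc_n P" "pc_r P m = enat l" "l \<le> Suc (length Y)" "\<forall>k<l. ((1, True) # Y) ! k = (m, True)"
        using cc by auto
      have "pc_r P m \<noteq> enat 0" using valid h unfolding pcp_valid_def zero_enat_def[symmetric] by auto
      then have "l \<noteq> 0" using h by auto
      then have "m = 1" using h(5) by (metis nth_Cons_0 not_gr_zero prod.inject)
      then have "l \<noteq> 1" using r1 h by auto
      then have "1 < l" using \<open>l \<noteq> 0\<close> by simp
      then have "Y ! 0 = (1, True)" "0 < length Y" using h \<open>m = 1\<close> by auto
      then show False using Y0 by simp
    next
      case k2
      then have "1 \<le> m" "m < fst (((1, True) # Y) ! 0)" using cc by auto
      then show False by simp
    next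
      case k6
      then show False using cc by auto
    next
      case k7
      then have "Suc 0 < Suc (length Y)" "fst (((1, True) # Y) ! 0) = m" "((1, True) # Y) ! Suc 0 = (m, \<not> snd (((1, True) # Y) ! 0))"
        using cc by auto
      then show False using Y0 by auto
    qed
  qed
  then show ?thesis ..
next
  case (Suc p')
  have "(m, p', q, l, rhs) \<in> cands P Y"
    using c unfolding Suc cands_nth by auto
  then show ?thesis using Suc by blast
qed

lemma prefix_gen:
  assumes valid: "pcp_valid P" and der: "pcp_derived P" and r1: "pc_r P 1 \<noteq> enat 1" and X: "X \<in> lists (alph P 2)"
  shows "\<exists>T. collect P ((1, True) # X) = (1, True) # T \<and> T \<in> lists (alph P 2) \<and> pc_eq P 2 X T \<and> reduced_from P 2 T"
proof -
  obtain V where V: "(stp P)\<^sup>*\<^sup>* ((1, True) # X) V" "collect_step P V = None" using terminates[OF valid] by blast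
  have cV: "collect P ((1, True) # X) = V" using collect_eq[OF valid V] .
  have inv: "\<exists>T. V = (1, True) # T \<and> T \<in> lists (alph P 2) \<and> pc_eq P 2 X T"
    using V(1)
  proof (induction rule: rtranclp_induct)
    case base
    then show ?case using X by (auto intro: pc_eq.refl)
  next
    case (step y z)
    obtain T where T: "y = (1, True) # T" "T \<in> lists (alph P 2)" "pc_eq P 2 X T" using step.IH by blast
    obtain m p q l rhs where c: "(m, p, q, l, rhs) \<in> cands P y" and z: "z = take p y @ rhs @ drop (p + l) y"
      using step_cand[OF step.hyps(2)] by blast
    obtain p' where p': "p = Suc p'" "(m, p', q, l, rhs) \<in> cands P T"
      using unshift[OF valid r1 T(2)] c T(1) by blast
    have z': "z = (1, True) # (take p' T @ rhs @ drop (p' + l) T)" using z T(1) p' by simp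
    have "take p' T @ rhs @ drop (p' + l) T \<in> lists (alph P 2) \<and> pc_eq P 2 T (take p' T @ rhs @ drop (p' + l) T)"
      by (rule step_level[OF valid _ T(2) DR2[OF der] p'(2)]) simp
    then show ?case using z' T(3) by (blast intro: pc_eq.trans)
  qed
  then obtain T where T: "V = (1, True) # T" "T \<in> lists (alph P 2)" "pc_eq P 2 X T" by blast
  have "cands P V = {}" using V(2) by (rule collect_step_None)
  then have "cands P T = {}" using T(1) cands_shift_ne by blast
  then obtain x where "T = rf P 2 x" "\<forall>i\<in>{2..pc_n P}. in_range P i (x i)"
    using reduced_noc[OF valid _ T(2)] by auto
  then have "reduced_from P 2 T" unfolding reduced_from_def rf_def by blast
  then show ?thesis using T cV by blast
qed

lemma pref_iff:
  assumes valid: "pcp_valid P" and der: "pcp_derived P" and cons: "consistent_from P 2" and n: "1 \<le> pc_n P"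
    and X1: "X1 \<in> lists (alph P 2)" and X2: "X2 \<in> lists (alph P 2)"
  shows "collect P ((1, True) # X1) = collect P ((1, True) # X2) \<longleftrightarrow> pc_eq P 2 X1 X2"
proof (cases "pc_r P 1 = enat 1")
  case True
  define E where "E = gvec P 1 (pc_e P 1)"
  have E: "E \<in> lists (alph P 2)" unfolding E_def by (rule gvec_lists) simp
  have EX1: "E @ X1 \<in> lists (alph P 2)" and EX2: "E @ X2 \<in> lists (alph P 2)" using E X1 X2 by auto
  have c1: "collect P (E @ X1) \<in> lists (alph P 2) \<and> pc_eq P 2 (E @ X1) (collect P (E @ X1)) \<and> reduced_from P 2 (collect P (E @ X1))"
    by (rule collect_level[OF valid _ EX1 DR2[OF der]]) simp
  have c2: "collect P (E @ X2) \<in> lists (alph P 2) \<and> pc_eq P 2 (E @ X2) (collect P (E @ X2)) \<and> reduced_from P 2 (collect P (E @ X2))"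
    by (rule collect_level[OF valid _ EX2 DR2[OF der]]) simp
  have e1: "collect P ((1, True) # X1) = collect P (E @ X1)" unfolding E_def by (rule prefix_r1[OF valid True n])
  have e2: "collect P ((1, True) # X2) = collect P (E @ X2)" unfolding E_def by (rule prefix_r1[OF valid True n])
  show ?thesis
  proof
    assume "collect P ((1, True) # X1) = collect P ((1, True) # X2)"
    then have "collect P (E @ X1) = collect P (E @ X2)" using e1 e2 by simp
    then have "pc_eq P 2 (E @ X1) (E @ X2)" using c1 c2 by (metis pc_eq.sym pc_eq.trans)
    then show "pc_eq P 2 X1 X2" using pc_cancel_left E X1 X2 by blast
  next
    assume "pc_eq P 2 X1 X2"
    then have "pc_eq P 2 (E @ X1) (E @ X2)" using E by (rule pc_eq_congL)
    then have "pc_eq P 2 (collect P (E @ X1)) (collect P (E @ X2))" using c1 c2 by (metis pc_eq.sym pc_eq.trans)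
    then have "collect P (E @ X1) = collect P (E @ X2)" using consistent_unique[OF cons] c1 c2 by blast
    then show "collect P ((1, True) # X1) = collect P ((1, True) # X2)" using e1 e2 by simp
  qed
next
  case False
  obtain T1 where T1: "collect P ((1, True) # X1) = (1, True) # T1" "T1 \<in> lists (alph P 2)" "pc_eq P 2 X1 T1" "reduced_from P 2 T1"
    using prefix_gen[OF valid der False X1] by blast
  obtain T2 where T2: "collect P ((1, True) # X2) = (1, True) # T2" "T2 \<in> lists (alph P 2)" "pc_eq P 2 X2 T2" "reduced_from P 2 T2"
    using prefix_gen[OF valid der False X2] by blast
  show ?thesis
  proof
    assume "collect P ((1, True) # X1) = collect P ((1, True) # X2)"
    then have "T1 = T2" using T1 T2 by simp
    then show "pc_eq P 2 X1 X2" using T1 T2 by (metis pc_eq.sym pc_eq.trans)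
  next
    assume "pc_eq P 2 X1 X2"
    then have "pc_eq P 2 T1 T2" using T1 T2 by (metis pc_eq.sym pc_eq.trans)
    then have "T1 = T2" using consistent_unique[OF cons] T1 T2 by blast
    then show "collect P ((1, True) # X1) = collect P ((1, True) # X2)" using T1 T2 by simp
  qed
qed

lemma neg_gvec:
  assumes a: "(l, False) \<in> set (gvec P i v)" and r: "\<forall>k. i < k \<and> k \<le> pc_n P \<longrightarrow> in_range P k (v k)"
  shows "pc_r P l = \<infinity>"
proof -
  obtain k where k: "k \<in> set [Suc i..<Suc (pc_n P)]" "(l, False) \<in> set (gpow k (v k))"
    using a unfolding gvec_def by auto
  have "l = k" using set_gpow[OF k(2)] by simp
  have "\<not> 0 \<le> v k" using set_gpow_sign[OF k(2)] by simp
  moreover have "in_range P k (v k)" using r k(1) by auto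
  ultimately have "\<forall>t. pc_r P k \<noteq> enat t" unfolding in_range_def by auto
  then show ?thesis using \<open>l = k\<close> by (cases "pc_r P k") auto
qed

lemma TT_eq_iff: "u \<in> lists (alph P 2) \<Longrightarrow> v \<in> lists (alph P 2) \<Longrightarrow>
  TT P u = TT P v \<longleftrightarrow> pc_eq P 2 (tau P u) (tau P v)"
  unfolding TT_def using theta_eq_iff[OF tau_lists tau_lists] by blast

lemma eq_via:
  assumes valid: "pcp_valid P" and der: "pcp_derived P" and cons: "consistent_from P 2" and n: "1 \<le> pc_n P"
    and u1: "u1 \<in> lists (alph P 2)" "\<forall>(l, s)\<in>set u1. \<not> s \<longrightarrow> pc_r P l = \<infinity>"
    and u2: "u2 \<in> lists (alph P 2)" "\<forall>(l, s)\<in>set u2. \<not> s \<longrightarrow> pc_r P l = \<infinity>"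
  shows "collect P (u1 @ [(1, True)]) = collect P (u2 @ [(1, True)]) \<longleftrightarrow> TT P u1 = TT P u2"
proof -
  have "collect P (u1 @ [(1, True)]) = collect P ((1, True) # tau P u1)"
    using move_all[OF valid u1(1) u1(2), of "[]"] by simp
  moreover have "collect P (u2 @ [(1, True)]) = collect P ((1, True) # tau P u2)"
    using move_all[OF valid u2(1) u2(2), of "[]"] by simp
  ultimately show ?thesis
    using pref_iff[OF valid der cons n tau_lists tau_lists] TT_eq_iff[OF u1(1) u2(1)] by simp
qed

theorem lemma10:
  fixes P :: pcp
  assumes "pcp_valid P"
    and "pcp_derived P"
    and "consistent_from P 2"
  shows "(\<exists>\<sigma> \<in> hom (pc_group P 2) (pc_group P 2).
            \<forall>w \<in> lists (alph P 2). \<sigma> (theta P 2 w) = theta P 2 (tau P w))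
         \<longleftrightarrow>
         ((\<forall>j k. 1 < j \<and> j < k \<and> k \<le> pc_n P \<longrightarrow>
             collect P ((j, True) # gvec P j (pc_a P j k) @ [(1, True)])
             = collect P [(k, True), (j, True), (1, True)]) \<and>
          (\<forall>j t. 1 < j \<and> j \<le> pc_n P \<and> pc_r P j = enat t \<longrightarrow>
             collect P (replicate t (j, True) @ [(1, True)])
             = collect P (gvec P j (pc_e P j) @ [(1, True)])))"
proof -
  note valid = assms(1) and der = assms(2) and cons = assms(3)
  have EQ1: "collect P ((j, True) # gvec P j (pc_a P j k) @ [(1, True)]) = collect P [(k, True), (j, True), (1, True)]
     \<longleftrightarrow> TT P ((j, True) # gvec P j (pc_a P j k)) = TT P [(k, True), (j, True)]"
    if jk: "1 < j" "j < k" "k \<le> pc_n P" for j k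
  proof -
    have g: "gvec P j v \<in> lists (alph P 2)" for v by (rule gvec_lists) (use jk in simp)
    have u1: "(j, True) # gvec P j (pc_a P j k) \<in> lists (alph P 2)" using g jk by (simp add: alph_def)
    have ir: "\<forall>k'. j < k' \<and> k' \<le> pc_n P \<longrightarrow> in_range P k' (pc_a P j k k')"
      using valid jk unfolding pcp_valid_def by auto
    have u1n: "\<forall>(l, s)\<in>set ((j, True) # gvec P j (pc_a P j k)). \<not> s \<longrightarrow> pc_r P l = \<infinity>"
      using neg_gvec[OF _ ir] by auto
    have u2: "[(k, True), (j, True)] \<in> lists (alph P 2)" using jk by (auto simp: alph_def)
    show ?thesis
      using eq_via[OF valid der cons _ u1 u1n u2] jk by simp
  qed
  have EQ2: "collect P (replicate t (j, True) @ [(1, True)]) = collect P (gvec P j (pc_e P j) @ [(1, True)])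
     \<longleftrightarrow> TT P (replicate t (j, True)) = TT P (gvec P j (pc_e P j))"
    if jt: "1 < j" "j \<le> pc_n P" "pc_r P j = enat t" for j t
  proof -
    have g: "gvec P j (pc_e P j) \<in> lists (alph P 2)" by (rule gvec_lists) (use jt in simp)
    have u1: "replicate t (j, True) \<in> lists (alph P 2)" using jt by (auto simp: alph_def)
    have ir: "\<forall>k'. j < k' \<and> k' \<le> pc_n P \<longrightarrow> in_range P k' (pc_e P j k')"
      using valid jt unfolding pcp_valid_def by auto
    have u2n: "\<forall>(l, s)\<in>set (gvec P j (pc_e P j)). \<not> s \<longrightarrow> pc_r P l = \<infinity>"
      using neg_gvec[OF _ ir] by auto
    show ?thesis
      using eq_via[OF valid der cons _ u1 _ g u2n] jt by auto
  qed
  show ?thesis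
  proof
    assume "\<exists>\<sigma> \<in> hom (pc_group P 2) (pc_group P 2). \<forall>w \<in> lists (alph P 2). \<sigma> (theta P 2 w) = theta P 2 (tau P w)"
    then obtain \<sigma> where \<sigma>: "\<forall>w \<in> lists (alph P 2). \<sigma> (theta P 2 w) = TT P w" unfolding TT_def by blast
    have resp: "TT P u = TT P v" if "(u, v) \<in> rels P 2" for u v
    proof -
      have "pc_eq P 2 u v" using that by (rule rel0)
      then have "u \<in> lists (alph P 2)" "v \<in> lists (alph P 2)" "theta P 2 u = theta P 2 v"
        using pc_eq_lists theta_eq_iff by blast+
      then show ?thesis using \<sigma> by metis
    qed
    show "(\<forall>j k. 1 < j \<and> j < k \<and> k \<le> pc_n P \<longrightarrow>
             collect P ((j, True) # gvec P j (pc_a P j k) @ [(1, True)])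
             = collect P [(k, True), (j, True), (1, True)]) \<and>
          (\<forall>j t. 1 < j \<and> j \<le> pc_n P \<and> pc_r P j = enat t \<longrightarrow>
             collect P (replicate t (j, True) @ [(1, True)])
             = collect P (gvec P j (pc_e P j) @ [(1, True)]))"
    proof (intro conjI allI impI)
      fix j k assume jk: "1 < j \<and> j < k \<and> k \<le> pc_n P"
      have "([(k, True), (j, True)], (j, True) # gvec P j (pc_a P j k)) \<in> rels P 2"
        unfolding rels_def using jk by auto
      then show "collect P ((j, True) # gvec P j (pc_a P j k) @ [(1, True)]) = collect P [(k, True), (j, True), (1, True)]"
        using EQ1[of j k] jk resp by auto
    next
      fix j t assume jt: "1 < j \<and> j \<le> pc_n P \<and> pc_r P j = enat t"
      have "(replicate t (j, True), gvec P j (pc_e P j)) \<in> rels P 2"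
        unfolding rels_def using jt by auto
      then show "collect P (replicate t (j, True) @ [(1, True)]) = collect P (gvec P j (pc_e P j) @ [(1, True)])"
        using EQ2[of j t] jt resp by auto
    qed
  next
    assume E: "(\<forall>j k. 1 < j \<and> j < k \<and> k \<le> pc_n P \<longrightarrow>
             collect P ((j, True) # gvec P j (pc_a P j k) @ [(1, True)])
             = collect P [(k, True), (j, True), (1, True)]) \<and>
          (\<forall>j t. 1 < j \<and> j \<le> pc_n P \<and> pc_r P j = enat t \<longrightarrow>
             collect P (replicate t (j, True) @ [(1, True)])
             = collect P (gvec P j (pc_e P j) @ [(1, True)]))"
    have E1: "TT P ((j, True) # gvec P j (pc_a P j k)) = TT P [(k, True), (j, True)]"
      if "1 < j" "j < k" "k \<le> pc_n P" for j k using E EQ1[OF that] that by blast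
    have E2: "TT P (replicate t (j, True)) = TT P (gvec P j (pc_e P j))"
      if "1 < j" "j \<le> pc_n P" "pc_r P j = enat t" for j t using E EQ2[OF that] that by blast
    have RR: "\<forall>(u, v)\<in>rels P 2. TT P u = TT P v"
      by (rule respect_all[OF valid der cons E1 E2]) simp_all
    have resp: "pc_eq P 2 u v \<Longrightarrow> TT P u = TT P v" for u v
      by (rule pc_eq_TT[OF der _ RR]) simp_all
    define \<sigma> where "\<sigma> = (\<lambda>X. TT P (SOME u. u \<in> X))"
    have \<sigma>w: "\<sigma> (theta P 2 w) = TT P w" if w: "w \<in> lists (alph P 2)" for w
    proof -
      have "(SOME u. u \<in> theta P 2 w) \<in> theta P 2 w" by (rule someI) (rule theta_mem[OF w])
      then have "pc_eq P 2 w (SOME u. u \<in> theta P 2 w)" by (simp add: theta_def)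
      then show ?thesis unfolding \<sigma>_def using resp by (metis pc_eq.sym)
    qed
    have hom: "\<sigma> \<in> hom (pc_group P 2) (pc_group P 2)"
    proof (rule homI)
      fix x assume "x \<in> carrier (pc_group P 2)"
      then show "\<sigma> x \<in> carrier (pc_group P 2)" unfolding \<sigma>_def by (rule_tac TT_carrier)
    next
      fix x y assume "x \<in> carrier (pc_group P 2)" "y \<in> carrier (pc_group P 2)"
      then obtain u v where uv: "u \<in> lists (alph P 2)" "v \<in> lists (alph P 2)" "x = theta P 2 u" "y = theta P 2 v"
        by (auto simp: carrier_pc_group)
      have "x \<otimes>\<^bsub>pc_group P 2\<^esub> y = theta P 2 (u @ v)" using uv theta_mult by blast
      then have "\<sigma> (x \<otimes>\<^bsub>pc_group P 2\<^esub> y) = TT P (u @ v)" using \<sigma>w uv by simp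
      also have "\<dots> = TT P u \<otimes>\<^bsub>pc_group P 2\<^esub> TT P v" by (rule TT_mult)
      also have "\<dots> = \<sigma> x \<otimes>\<^bsub>pc_group P 2\<^esub> \<sigma> y" using \<sigma>w uv by simp
      finally show "\<sigma> (x \<otimes>\<^bsub>pc_group P 2\<^esub> y) = \<sigma> x \<otimes>\<^bsub>pc_group P 2\<^esub> \<sigma> y" .
    qed
    show "\<exists>\<sigma> \<in> hom (pc_group P 2) (pc_group P 2). \<forall>w \<in> lists (alph P 2). \<sigma> (theta P 2 w) = theta P 2 (tau P w)"
      using hom \<sigma>w unfolding TT_def by blast
  qed
qed

end
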